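(* For every $k$ it holds that $k\text{-}NN(IP_n)\ge\frac{n}{6+o(1)}$, where $o(1)$ tends to $0$ as $n\to\infty$.
   Context: The mod 2 inner product function of $2n$ variables is $IP_n(x_1,\dots,x_n,y_1,\dots,y_n)=(x_1\wedge y_1)\oplus\cdots\oplus(x_n\wedge y_n)$. For $f:\{0,1\}^m\to\{0,1\}$ and a positive integer $k$, a $k$-nearest neighbor representation of $f$ is a pair of disjoint finite sets $(P,N)$ of points of $\mathbb R^m$ such that for every $a\in\{0,1\}^m$, the $k$ smallest Euclidean distances from $a$ to points of $P\cup N$ are all strictly smaller than the remaining $|P\cup N|-k$ distances, and $f(a)=1$ iff at least $k/2$ of the $k$ points of $P\cup N$ closest to $a$ belong to $P$. Its size is $|P\cup N|$, and $k\text{-}NN(f)$ is the minimum size of a $k$-nearest neighbor representation of $f$. *)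

theory Defs
  imports Complex_Main
begin

text \<open>Points of R^m are represented as functions nat => real vanishing at
  all indices >= m (coordinates 0..m-1).\<close>

definition euclid_space :: "nat \<Rightarrow> (nat \<Rightarrow> real) set" where
  "euclid_space m = {p. \<forall>i\<ge>m. p i = 0}"

definition bool_cube :: "nat \<Rightarrow> (nat \<Rightarrow> real) set" where
  "bool_cube m = {a. (\<forall>i<m. a i \<in> {0, 1}) \<and> (\<forall>i\<ge>m. a i = 0)}"

definition edist :: "nat \<Rightarrow> (nat \<Rightarrow> real) \<Rightarrow> (nat \<Rightarrow> real) \<Rightarrow> real" where
  "edist m a p = sqrt (\<Sum>i<m. (a i - p i)^2)"

text \<open>Inner product mod 2 of 2n variables: x_i is coordinate i, y_i is coordinate n+i.\<close>
definition IP :: "nat \<Rightarrow> (nat \<Rightarrow> real) \<Rightarrow> bool" where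
  "IP n a = odd (card {i. i < n \<and> a i = 1 \<and> a (n + i) = 1})"

definition is_kNN_rep :: "nat \<Rightarrow> nat \<Rightarrow> ((nat \<Rightarrow> real) \<Rightarrow> bool)
    \<Rightarrow> (nat \<Rightarrow> real) set \<Rightarrow> (nat \<Rightarrow> real) set \<Rightarrow> bool" where
  "is_kNN_rep k m f P N \<longleftrightarrow>
     finite P \<and> finite N \<and> P \<inter> N = {} \<and> P \<union> N \<subseteq> euclid_space m \<and>
     (\<forall>a\<in>bool_cube m. \<exists>S. S \<subseteq> P \<union> N \<and> card S = k \<and>
        (\<forall>s\<in>S. \<forall>t\<in>(P \<union> N) - S. edist m a s < edist m a t) \<and>
        (f a \<longleftrightarrow> real (card (S \<inter> P)) \<ge> real k / 2))"

definition kNN :: "nat \<Rightarrow> nat \<Rightarrow> ((nat \<Rightarrow> real) \<Rightarrow> bool) \<Rightarrow> nat" where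
  "kNN k m f = (LEAST s. \<exists>P N. is_kNN_rep k m f P N \<and> card (P \<union> N) = s)"

end

theory Submission
  imports Defs "Jordan_Normal_Form.Char_Poly"
begin


definition colp :: "nat \<Rightarrow> real mat \<Rightarrow> nat \<Rightarrow> nat \<Rightarrow> real" where
  "colp r C i j = (\<Sum>a\<in>{0..<r}. C$$(a,i) * C$$(a,j))"

lemma colp_sym: "colp r C i j = colp r C j i"
  unfolding colp_def by (simp add: mult.commute)

lemma colp_nonneg: "colp r C i i \<ge> 0"
  unfolding colp_def by (intro sum_nonneg) auto

lemma colp_zero_col:
  assumes "colp r C i i = 0" "a < r"
  shows "C$$(a,i) = 0"
proof -
  have "\<forall>b\<in>{0..<r}. C$$(b,i) * C$$(b,i) = 0"
    using assms(1) unfolding colp_def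
    by (subst sum_nonneg_eq_0_iff[symmetric]) auto
  then show ?thesis using assms(2) by auto
qed

lemma colp_zero_other:
  assumes "colp r C i i = 0"
  shows "colp r C i j = 0"
  unfolding colp_def using colp_zero_col[OF assms] by simp

lemma gs_step:
  fixes C :: "real mat"
  assumes C: "C \<in> carrier_mat r r" and k: "k < r"
    and orth: "\<forall>i<k. \<forall>j<k. i \<noteq> j \<longrightarrow> colp r C i j = 0"
  shows "\<exists>C'\<in>carrier_mat r r. det C' = det C \<and> (\<forall>i<r. colp r C' i i \<le> colp r C i i)
     \<and> (\<forall>i<Suc k. \<forall>j<Suc k. i \<noteq> j \<longrightarrow> colp r C' i j = 0)"
proof -
  define al where "al i = colp r C k i / colp r C i i" for i
  define E :: "real mat" where "E = mat r r (\<lambda>(i,j). if i = j then 1 else if j = k \<and> i < k then - al i else 0)"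
  have E: "E \<in> carrier_mat r r" unfolding E_def by simp
  have ut: "upper_triangular E" unfolding E_def upper_triangular_def by auto
  have detE: "det E = 1"
    using det_upper_triangular[OF ut E] unfolding prod_list_diag_prod
    by (simp add: E_def)
  define C' where "C' = C * E"
  have C': "C' \<in> carrier_mat r r" unfolding C'_def using C E by simp
  have detC': "det C' = det C" unfolding C'_def using det_mult[OF C E] detE by simp
  have entry: "C'$$(a,j) = (\<Sum>b\<in>{0..<r}. C$$(a,b) * E$$(b,j))" if "a < r" "j < r" for a j
    unfolding C'_def using that C E by (simp add: scalar_prod_def)
  have same: "C'$$(a,j) = C$$(a,j)" if "a < r" "j < r" "j \<noteq> k" for a j
  proof -
    have "C'$$(a,j) = (\<Sum>b\<in>{0..<r}. C$$(a,b) * (if b = j then 1 else 0))"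
      unfolding entry[OF that(1,2)] using that by (intro sum.cong) (auto simp: E_def)
    also have "\<dots> = C$$(a,j)" using that by (simp add: if_distrib sum.delta cong: if_cong)
    finally show ?thesis .
  qed
  have newk: "C'$$(a,k) = C$$(a,k) - (\<Sum>l\<in>{0..<k}. al l * C$$(a,l))" if "a < r" for a
  proof -
    have "C'$$(a,k) = (\<Sum>b\<in>{0..<r}. (if b = k then C$$(a,k) else 0) + (if b < k then - (al b * C$$(a,b)) else 0))"
      unfolding entry[OF that k] using that k by (intro sum.cong) (auto simp: E_def)
    also have "\<dots> = C$$(a,k) + (\<Sum>b\<in>{0..<r}. (if b < k then - (al b * C$$(a,b)) else 0))"
      using k by (simp add: sum.distrib sum.delta)
    also have "(\<Sum>b\<in>{0..<r}. (if b < k then - (al b * C$$(a,b)) else 0)) = (\<Sum>b\<in>{0..<k}. - (al b * C$$(a,b)))"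
      using k by (subst sum.inter_filter[symmetric]) (auto intro!: sum.cong)
    finally show ?thesis by (simp add: sum_negf)
  qed
  define p where "p a = (\<Sum>l\<in>{0..<k}. al l * C$$(a,l))" for a
  have newk': "C'$$(a,k) = C$$(a,k) - p a" if "a < r" for a using newk[OF that] p_def by simp
  have orthk: "colp r C' i k = 0" if i: "i < k" for i
  proof -
    have ir: "i < r" using i k by simp
    have "colp r C' i k = (\<Sum>a\<in>{0..<r}. C$$(a,i) * (C$$(a,k) - p a))"
      unfolding colp_def using ir i by (intro sum.cong) (auto simp: same newk')
    also have "\<dots> = colp r C i k - (\<Sum>a\<in>{0..<r}. C$$(a,i) * p a)"
      unfolding colp_def by (simp add: right_diff_distrib sum_subtractf)
    also have "(\<Sum>a\<in>{0..<r}. C$$(a,i) * p a) = (\<Sum>l\<in>{0..<k}. al l * colp r C i l)"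
      unfolding p_def colp_def by (simp add: sum_distrib_left sum_distrib_right mult_ac sum.swap[of _ "{0..<r}"])
    also have "\<dots> = (\<Sum>l\<in>{0..<k}. if l = i then al i * colp r C i i else 0)"
      using orth i by (intro sum.cong) auto
    also have "\<dots> = al i * colp r C i i" using i by simp
    also have "\<dots> = colp r C i k"
    proof (cases "colp r C i i = 0")
      case True then show ?thesis using colp_zero_other[OF True, of k] by simp
    next
      case False then show ?thesis unfolding al_def using colp_sym[of r C k i] by simp
    qed
    finally show ?thesis by simp
  qed
  have pk: "(\<Sum>a\<in>{0..<r}. C'$$(a,k) * p a) = 0"
  proof -
    have "(\<Sum>a\<in>{0..<r}. C'$$(a,k) * p a) = (\<Sum>l\<in>{0..<k}. al l * (\<Sum>a\<in>{0..<r}. C$$(a,l) * C'$$(a,k)))"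
      unfolding p_def
      by (simp add: sum_distrib_left sum_distrib_right mult_ac sum.swap[of _ "{0..<r}"])
    also have "\<dots> = (\<Sum>l\<in>{0..<k}. al l * colp r C' l k)"
    proof (intro sum.cong refl)
      fix l assume l: "l \<in> {0..<k}"
      have "(\<Sum>a\<in>{0..<r}. C$$(a,l) * C'$$(a,k)) = colp r C' l k" unfolding colp_def
      proof (intro sum.cong refl)
        fix a assume "a \<in> {0..<r}" then show "C$$(a,l) * C'$$(a,k) = C'$$(a,l) * C'$$(a,k)"
          using l k by (simp add: same)
      qed
      then show "al l * (\<Sum>a\<in>{0..<r}. C$$(a,l) * C'$$(a,k)) = al l * colp r C' l k" by simp
    qed
    also have "\<dots> = 0" using orthk by simp
    finally show ?thesis .
  qed
  have normk: "colp r C' k k \<le> colp r C k k"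
  proof -
    have "colp r C k k = (\<Sum>a\<in>{0..<r}. (C'$$(a,k) + p a) * (C'$$(a,k) + p a))"
      unfolding colp_def by (intro sum.cong) (auto simp: newk')
    also have "\<dots> = colp r C' k k + 2 * (\<Sum>a\<in>{0..<r}. C'$$(a,k) * p a) + (\<Sum>a\<in>{0..<r}. p a * p a)"
      unfolding colp_def by (simp add: algebra_simps sum.distrib sum_distrib_left)
    also have "\<dots> = colp r C' k k + (\<Sum>a\<in>{0..<r}. p a * p a)" using pk by simp
    finally show ?thesis by (simp add: sum_nonneg)
  qed
  have norms: "\<forall>i<r. colp r C' i i \<le> colp r C i i"
  proof (intro allI impI)
    fix i assume i: "i < r"
    show "colp r C' i i \<le> colp r C i i"
    proof (cases "i = k")
      case True then show ?thesis using normk by simp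
    next
      case False then show ?thesis unfolding colp_def using i by (simp add: same)
    qed
  qed
  have orth': "\<forall>i<Suc k. \<forall>j<Suc k. i \<noteq> j \<longrightarrow> colp r C' i j = 0"
  proof (intro allI impI)
    fix i j assume i: "i < Suc k" and j: "j < Suc k" and ij: "i \<noteq> j"
    show "colp r C' i j = 0"
    proof (cases "i = k")
      case True then show ?thesis using orthk[of j] j ij colp_sym[of r C' i j] by simp
    next
      case ik: False
      show ?thesis
      proof (cases "j = k")
        case True then show ?thesis using orthk[of i] i ik by simp
      next
        case False
        have "colp r C' i j = colp r C i j" unfolding colp_def using i j k ik False
          by (intro sum.cong) (auto simp: same)
        then show ?thesis using orth i j ik False ij by simp
      qed
    qed
  qed
  show ?thesis using C' detC' norms orth' by blast
qed

lemma gs_all: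
  fixes M :: "real mat"
  assumes M: "M \<in> carrier_mat r r" and k: "k \<le> r"
  shows "\<exists>C\<in>carrier_mat r r. det C = det M \<and> (\<forall>i<r. colp r C i i \<le> colp r M i i)
     \<and> (\<forall>i<k. \<forall>j<k. i \<noteq> j \<longrightarrow> colp r C i j = 0)"
  using k
proof (induction k)
  case 0 then show ?case using M by auto
next
  case (Suc k)
  then obtain C where C: "C \<in> carrier_mat r r" "det C = det M" "\<forall>i<r. colp r C i i \<le> colp r M i i"
     "\<forall>i<k. \<forall>j<k. i \<noteq> j \<longrightarrow> colp r C i j = 0" by auto
  obtain C' where C': "C' \<in> carrier_mat r r" "det C' = det C" "\<forall>i<r. colp r C' i i \<le> colp r C i i"
     "\<forall>i<Suc k. \<forall>j<Suc k. i \<noteq> j \<longrightarrow> colp r C' i j = 0"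
    using gs_step[OF C(1) _ C(4)] Suc.prems by auto
  show ?case using C C' by (intro bexI[of _ C']) (auto intro: order_trans)
qed

lemma hadamard:
  fixes M :: "real mat"
  assumes M: "M \<in> carrier_mat r r"
  shows "(det M)^2 \<le> (\<Prod>i\<in>{0..<r}. colp r M i i)"
proof -
  obtain C where C: "C \<in> carrier_mat r r" "det C = det M" "\<forall>i<r. colp r C i i \<le> colp r M i i"
     "\<forall>i<r. \<forall>j<r. i \<noteq> j \<longrightarrow> colp r C i j = 0"
    using gs_all[OF M le_refl] by auto
  define G where "G = transpose_mat C * C"
  have G: "G \<in> carrier_mat r r" unfolding G_def using C by simp
  have Gij: "G$$(i,j) = colp r C i j" if "i < r" "j < r" for i j
    unfolding G_def colp_def using that C by (simp add: scalar_prod_def)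
  have utG: "upper_triangular G" unfolding upper_triangular_def using G Gij C(4) by auto
  have "det G = (\<Prod>i\<in>{0..<r}. colp r C i i)"
    using det_upper_triangular[OF utG G] G unfolding prod_list_diag_prod by (simp add: Gij)
  moreover have "det G = det C * det C"
    unfolding G_def using det_mult[of "transpose_mat C" r C] det_transpose[of C r] C by simp
  ultimately have "(det M)^2 = (\<Prod>i\<in>{0..<r}. colp r C i i)" using C(2) by (simp add: power2_eq_square)
  also have "\<dots> \<le> (\<Prod>i\<in>{0..<r}. colp r M i i)"
    using C(3) by (intro prod_mono) (auto simp: colp_nonneg)
  finally show ?thesis .
qed


lemma det_rank1:
  fixes z :: "nat \<Rightarrow> real"
  assumes r: "0 < r"
  shows "det (1\<^sub>m r + mat r r (\<lambda>(i,j). z i * z j)) = 1 + (\<Sum>l\<in>{0..<r}. z l * z l)"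
proof -
  define I :: "real mat" where "I = 1\<^sub>m r"
  define B :: "real mat" where "B = mat r r (\<lambda>(i,j). if j = 0 then z i else 0)"
  define C :: "real mat" where "C = mat r r (\<lambda>(i,j). if i = 0 then - z j else 0)"
  have I: "I \<in> carrier_mat r r" and B: "B \<in> carrier_mat r r" and C: "C \<in> carrier_mat r r"
    unfolding I_def B_def C_def by auto
  have BC: "B * C = mat r r (\<lambda>(i,j). - (z i * z j))"
  proof (rule eq_matI)
    fix i j assume i: "i < dim_row (mat r r (\<lambda>(i,j). - (z i * z j)) :: real mat)"
      and j: "j < dim_col (mat r r (\<lambda>(i,j). - (z i * z j)) :: real mat)"
    then have i: "i < r" and j: "j < r" by auto
    have "(B * C) $$ (i,j) = (\<Sum>l\<in>{0..<r}. B$$(i,l) * C$$(l,j))"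
      using i j B C by (simp add: scalar_prod_def)
    also have "\<dots> = (\<Sum>l\<in>{0..<r}. if l = 0 then z i * (- z j) else 0)"
      using i j by (intro sum.cong) (auto simp: B_def C_def)
    also have "\<dots> = - (z i * z j)" using r by simp
    finally show "(B * C) $$ (i,j) = mat r r (\<lambda>(i,j). - (z i * z j)) $$ (i,j)" using i j by simp
  qed (use B C in auto)
  define s where "s = (\<Sum>l\<in>{0..<r}. z l * z l)"
  have CB: "C * B = mat r r (\<lambda>(i,j). if i = 0 \<and> j = 0 then - s else 0)"
  proof (rule eq_matI)
    fix i j assume i: "i < dim_row (mat r r (\<lambda>(i,j). if i = 0 \<and> j = 0 then - s else 0) :: real mat)"
      and j: "j < dim_col (mat r r (\<lambda>(i,j). if i = 0 \<and> j = 0 then - s else 0) :: real mat)"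
    then have i: "i < r" and j: "j < r" by auto
    have "(C * B) $$ (i,j) = (\<Sum>l\<in>{0..<r}. C$$(i,l) * B$$(l,j))"
      using i j B C by (simp add: scalar_prod_def)
    also have "\<dots> = (\<Sum>l\<in>{0..<r}. if i = 0 \<and> j = 0 then - (z l * z l) else 0)"
      using i j by (intro sum.cong) (auto simp: B_def C_def)
    also have "\<dots> = (if i = 0 \<and> j = 0 then - s else 0)" unfolding s_def by (simp add: sum_negf)
    finally show "(C * B) $$ (i,j) = mat r r (\<lambda>(i,j). if i = 0 \<and> j = 0 then - s else 0) $$ (i,j)"
      using i j by simp
  qed (use B C in auto)
  define D where "D = I - C * B"
  have D: "D \<in> carrier_mat r r" unfolding D_def using I B C by auto
  have Dij: "D $$ (i,j) = (if i = j then (if i = 0 then 1 + s else 1) else 0)" if "i < r" "j < r" for i j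
    unfolding D_def CB I_def using that by auto
  have utD: "upper_triangular D" unfolding upper_triangular_def using D Dij by auto
  have detD: "det D = 1 + s"
  proof -
    have "det D = (\<Prod>i\<in>{0..<r}. D $$ (i,i))"
      using det_upper_triangular[OF utD D] D unfolding prod_list_diag_prod by simp
    also have "\<dots> = (\<Prod>i\<in>{0..<r}. if i = 0 then 1 + s else 1)"
      by (intro prod.cong) (auto simp: Dij)
    also have "\<dots> = 1 + s" using r by (simp add: prod.delta)
    finally show ?thesis .
  qed
  define M where "M = four_block_mat I B C I"
  have "det M = det (I * I - B * C)"
    unfolding M_def by (rule det_four_block_mat[OF I B C I]) (use C I_def in simp)
  also have "I * I - B * C = 1\<^sub>m r + mat r r (\<lambda>(i,j). z i * z j)"
    unfolding BC I_def by (intro eq_matI) auto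
  finally have M1: "det M = det (1\<^sub>m r + mat r r (\<lambda>(i,j). z i * z j))" .
  define L where "L = four_block_mat I (0\<^sub>m r r) C I"
  define R where "R = four_block_mat I B (0\<^sub>m r r) D"
  have L: "L \<in> carrier_mat (r+r) (r+r)" unfolding L_def using I by simp
  have R: "R \<in> carrier_mat (r+r) (r+r)" unfolding R_def using I D by simp
  have "L * R = four_block_mat (I * I + 0\<^sub>m r r * 0\<^sub>m r r) (I * B + 0\<^sub>m r r * D)
       (C * I + I * 0\<^sub>m r r) (C * B + I * D)"
    unfolding L_def R_def by (rule mult_four_block_mat) (use I B C D in auto)
  also have "\<dots> = M"
  proof -
    have "I * I + 0\<^sub>m r r * 0\<^sub>m r r = I" using I I_def by simp
    moreover have "I * B + 0\<^sub>m r r * D = B" using B D I_def by simp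
    moreover have "C * I + I * 0\<^sub>m r r = C" using C I_def by simp
    moreover have "C * B + I * D = I"
      unfolding D_def I_def by (intro eq_matI) (use B C in auto)
    ultimately show ?thesis unfolding M_def by simp
  qed
  finally have LR: "L * R = M" .
  have dL: "det L = 1"
    unfolding L_def by (subst det_four_block_mat_upper_right_zero[OF I refl C I]) (simp add: I_def)
  have dR: "det R = det D"
    unfolding R_def by (subst det_four_block_mat_lower_left_zero[OF I B refl D]) (simp add: I_def)
  have "det M = 1 + s" using det_mult[OF L R] LR dL dR detD by simp
  then show ?thesis using M1 s_def by simp
qed


definition mv :: "nat \<Rightarrow> real mat \<Rightarrow> (nat \<Rightarrow> real) \<Rightarrow> nat \<Rightarrow> real" where
  "mv r A w a = (\<Sum>b\<in>{0..<r}. A$$(a,b) * w b)"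
definition nsq :: "nat \<Rightarrow> (nat \<Rightarrow> real) \<Rightarrow> real" where
  "nsq r y = (\<Sum>a\<in>{0..<r}. y a * y a)"
definition dotp :: "nat \<Rightarrow> (nat \<Rightarrow> real) \<Rightarrow> (nat \<Rightarrow> real) \<Rightarrow> real" where
  "dotp r y z = (\<Sum>a\<in>{0..<r}. y a * z a)"

lemma nsq_nonneg: "nsq r y \<ge> 0" unfolding nsq_def by (intro sum_nonneg) auto

lemma mv_mult:
  assumes A: "A \<in> carrier_mat r r" and B: "B \<in> carrier_mat r r" and a: "a < r"
  shows "mv r (A * B) w a = mv r A (mv r B w) a"
proof -
  have "mv r (A * B) w a = (\<Sum>b\<in>{0..<r}. (\<Sum>c\<in>{0..<r}. A$$(a,c) * B$$(c,b)) * w b)"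
    unfolding mv_def using A B a by (intro sum.cong) (auto simp: scalar_prod_def)
  also have "\<dots> = (\<Sum>b\<in>{0..<r}. \<Sum>c\<in>{0..<r}. A$$(a,c) * B$$(c,b) * w b)"
    by (simp add: sum_distrib_right)
  also have "\<dots> = (\<Sum>c\<in>{0..<r}. \<Sum>b\<in>{0..<r}. A$$(a,c) * B$$(c,b) * w b)"
    by (rule sum.swap)
  also have "\<dots> = (\<Sum>c\<in>{0..<r}. A$$(a,c) * (\<Sum>b\<in>{0..<r}. B$$(c,b) * w b))"
    by (simp add: sum_distrib_left mult.assoc)
  finally show ?thesis unfolding mv_def .
qed

definition blk :: "nat \<Rightarrow> (nat \<Rightarrow> nat \<Rightarrow> real) \<Rightarrow> nat \<Rightarrow> real mat" where
  "blk r w j = mat r r (\<lambda>(a,i). w (j*r+i) a)"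

lemma blk_carrier[simp]: "blk r w j \<in> carrier_mat r r" unfolding blk_def by simp

lemma colp_blk:
  assumes A: "A \<in> carrier_mat r r" and i: "i < r"
  shows "colp r (A * blk r w j) i i = nsq r (mv r A (w (j*r+i)))"
proof -
  have "(A * blk r w j)$$(a,i) = mv r A (w (j*r+i)) a" if "a < r" for a
    using A i that unfolding mv_def blk_def by (auto simp: scalar_prod_def intro!: sum.cong)
  then show ?thesis unfolding colp_def nsq_def by (auto intro!: sum.cong)
qed

lemma sum_blocks:
  fixes f :: "nat \<Rightarrow> real"
  shows "(\<Sum>k<q*r. f k) = (\<Sum>j<q. \<Sum>i\<in>{0..<r}. f (j*r+i))"
proof -
  have "(\<Sum>k<q*r. f k) = (\<Sum>j<q. sum f {j*r..<j*r+r})" by (rule sum.nat_group[symmetric])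
  also have "\<dots> = (\<Sum>j<q. \<Sum>i\<in>{0..<r}. f (j*r+i))"
  proof (rule sum.cong[OF refl])
    fix j assume "j \<in> {..<q}"
    have "sum f {0 + j*r..<r + j*r} = (\<Sum>i\<in>{0..<r}. f (i + j*r))" by (rule sum.shift_bounds_nat_ivl)
    then show "sum f {j*r..<j*r+r} = (\<Sum>i\<in>{0..<r}. f (j*r+i))" by (simp add: add.commute)
  qed
  finally show ?thesis .
qed

lemma ln4_gt1: "ln (4::real) > 1"
proof -
  have "exp 1 \<le> (3::real)" by (rule exp_le)
  then have "exp 1 < (4::real)" by linarith
  then have "ln (exp 1) < ln (4::real)" by (subst ln_less_cancel_iff) auto
  then show ?thesis by simp
qed

theorem isotropy:
  fixes r q :: nat and w :: "nat \<Rightarrow> nat \<Rightarrow> real"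
  assumes r: "0 < r" and q: "0 < q"
    and blkdet: "\<forall>j<q. det (blk r w j) \<noteq> 0"
  shows "\<exists>A\<in>carrier_mat r r. det A \<noteq> 0 \<and> (\<forall>k<q*r. nsq r (mv r A (w k)) > 0) \<and>
     (\<forall>z. nsq r z = 1 \<longrightarrow> real q / 6 \<le> (\<Sum>k<q*r. (dotp r z (mv r A (w k)))^2 / nsq r (mv r A (w k))))"
proof -
  define G where "G = {A \<in> carrier_mat r r. det A \<noteq> (0::real)}"
  have pos: "nsq r (mv r A (w k)) > 0" if A: "A \<in> G" and k: "k < q*r" for A k
  proof (rule ccontr)
    assume "\<not> ?thesis"
    then have z: "nsq r (mv r A (w k)) = 0" using nsq_nonneg[of r] by (metis less_eq_real_def)
    define j where "j = k div r"
    define i where "i = k mod r"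
    have kk: "k = j*r+i" unfolding j_def i_def by simp
    have j: "j < q" unfolding j_def using k r by (simp add: less_mult_imp_div_less)
    have i: "i < r" unfolding i_def using r by simp
    have Ac: "A \<in> carrier_mat r r" using A G_def by simp
    have "(det (A * blk r w j))^2 \<le> (\<Prod>i'\<in>{0..<r}. colp r (A * blk r w j) i' i')"
      by (rule hadamard) (use Ac in simp)
    also have "\<dots> = 0"
      using i z kk colp_blk[OF Ac i, of w j] by (intro prod_zero) auto
    finally have "det (A * blk r w j) = 0" by simp
    moreover have "det (A * blk r w j) = det A * det (blk r w j)" by (rule det_mult[OF Ac]) simp
    ultimately show False using A G_def blkdet j by simp
  qed
  define F where "F A = (\<Sum>k<q*r. ln (nsq r (mv r A (w k)))) - real q * ln ((det A)^2)" for A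
  define Cst where "Cst = (\<Sum>j<q. ln ((det (blk r w j))^2))"
  have lowb: "F A \<ge> Cst" if A: "A \<in> G" for A
  proof -
    have Ac: "A \<in> carrier_mat r r" and dA: "det A \<noteq> 0" using A G_def by auto
    have blockb: "(\<Sum>i\<in>{0..<r}. ln (nsq r (mv r A (w (j*r+i))))) \<ge> ln ((det A)^2) + ln ((det (blk r w j))^2)"
      if j: "j < q" for j
    proof -
      have posi: "\<forall>i\<in>{0..<r}. nsq r (mv r A (w (j*r+i))) > 0"
      proof
        fix i assume "i \<in> {0..<r}"
        then have "j*r+i < j*r+r" by simp
        also have "\<dots> = Suc j * r" by simp
        also have "\<dots> \<le> q*r" using j by (intro mult_le_mono1) simp
        finally have "j*r+i < q*r" .
        then show "nsq r (mv r A (w (j*r+i))) > 0" using pos[OF A] by simp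
      qed
      have "(\<Sum>i\<in>{0..<r}. ln (nsq r (mv r A (w (j*r+i))))) = ln (\<Prod>i\<in>{0..<r}. nsq r (mv r A (w (j*r+i))))"
        using posi by (subst ln_prod) (auto, metis atLeastLessThan_iff less_irrefl zero_le)
      also have "\<dots> \<ge> ln ((det (A * blk r w j))^2)"
      proof -
        have "(det (A * blk r w j))^2 \<le> (\<Prod>i\<in>{0..<r}. colp r (A * blk r w j) i i)"
          by (rule hadamard) (use Ac in simp)
        also have "\<dots> = (\<Prod>i\<in>{0..<r}. nsq r (mv r A (w (j*r+i))))"
          using colp_blk[OF Ac] by (intro prod.cong) auto
        finally have le: "(det (A * blk r w j))^2 \<le> (\<Prod>i\<in>{0..<r}. nsq r (mv r A (w (j*r+i))))" .
        have "det (A * blk r w j) = det A * det (blk r w j)" by (rule det_mult[OF Ac]) simp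
        then have p: "(det (A * blk r w j))^2 > 0" using dA blkdet j by simp
        then have p2: "(\<Prod>i\<in>{0..<r}. nsq r (mv r A (w (j*r+i)))) > 0" using le by linarith
        show ?thesis using le p p2 by (subst ln_le_cancel_iff) auto
      qed
      also have "ln ((det (A * blk r w j))^2) = ln ((det A)^2) + ln ((det (blk r w j))^2)"
      proof -
        have "det (A * blk r w j) = det A * det (blk r w j)" by (rule det_mult[OF Ac]) simp
        then show ?thesis using dA blkdet j by (simp add: power_mult_distrib ln_mult)
      qed
      finally show ?thesis .
    qed
    have "(\<Sum>k<q*r. ln (nsq r (mv r A (w k)))) = (\<Sum>j<q. \<Sum>i\<in>{0..<r}. ln (nsq r (mv r A (w (j*r+i)))))"
      by (rule sum_blocks)
    also have "\<dots> \<ge> (\<Sum>j<q. ln ((det A)^2) + ln ((det (blk r w j))^2))"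
      using blockb by (intro sum_mono) auto
    finally have "(\<Sum>k<q*r. ln (nsq r (mv r A (w k)))) \<ge> real q * ln ((det A)^2) + Cst"
      unfolding Cst_def by (simp add: sum.distrib)
    then show ?thesis unfolding F_def by simp
  qed
  have "1\<^sub>m r \<in> G" unfolding G_def by simp
  then have Gne: "G \<noteq> {}" by blast
  define m where "m = Inf (F ` G)"
  have bdd: "bdd_below (F ` G)" using lowb by (intro bdd_belowI[of _ Cst]) auto
  define del where "del = real q / 2"
  have del: "del > 0" unfolding del_def using q by simp
  obtain A0 where A0: "A0 \<in> G" "F A0 < m + del"
  proof -
    have "Inf (F ` G) < m + del" using del m_def by simp
    then obtain y where "y \<in> F ` G" "y < m + del" using cInf_less_iff[of "F ` G"] Gne bdd by auto
    then show ?thesis using that by auto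
  qed
  have A0c: "A0 \<in> carrier_mat r r" and dA0: "det A0 \<noteq> 0" using A0 G_def by auto
  have iso: "real q / 6 \<le> (\<Sum>k<q*r. (dotp r z (mv r A0 (w k)))^2 / nsq r (mv r A0 (w k)))"
    if z: "nsq r z = 1" for z
  proof -
    define P :: "real mat" where "P = 1\<^sub>m r + mat r r (\<lambda>(i,j). z i * z j)"
    have Pc: "P \<in> carrier_mat r r" unfolding P_def by simp
    have dP: "det P = 2" unfolding P_def using det_rank1[OF r, of z] z unfolding nsq_def by simp
    define A1 where "A1 = P * A0"
    have A1c: "A1 \<in> carrier_mat r r" unfolding A1_def using Pc A0c by simp
    have dA1: "det A1 = 2 * det A0" unfolding A1_def using det_mult[OF Pc A0c] dP by simp
    have A1G: "A1 \<in> G" unfolding G_def using A1c dA1 dA0 by simp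
    have mle: "m \<le> F A1" unfolding m_def using bdd A1G by (intro cInf_lower) auto
    define y where "y k = mv r A0 (w k)" for k
    define t where "t k = dotp r z (y k)" for k
    have mvA1: "mv r A1 (w k) a = y k a + z a * t k" if a: "a < r" for k a
    proof -
      have "mv r A1 (w k) a = mv r P (y k) a" unfolding A1_def y_def by (rule mv_mult[OF Pc A0c a])
      also have "\<dots> = (\<Sum>b\<in>{0..<r}. (if a = b then y k b else 0) + z a * (z b * y k b))"
        unfolding mv_def P_def using a by (intro sum.cong) (auto simp: algebra_simps)
      also have "\<dots> = (\<Sum>b\<in>{0..<r}. (if a = b then y k b else 0)) + z a * t k" unfolding t_def dotp_def
        by (simp only: sum.distrib sum_distrib_left)
      also have "\<dots> = y k a + z a * t k" using a by simp
      finally show ?thesis .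
    qed
    have nsqA1: "nsq r (mv r A1 (w k)) = nsq r (y k) + 3 * (t k)^2" for k
    proof -
      have "nsq r (mv r A1 (w k)) = (\<Sum>a\<in>{0..<r}. (y k a + z a * t k) * (y k a + z a * t k))"
        unfolding nsq_def by (intro sum.cong) (auto simp: mvA1)
      also have "\<dots> = (\<Sum>a\<in>{0..<r}. y k a * y k a + (2 * t k) * (z a * y k a) + (t k)^2 * (z a * z a))"
        by (intro sum.cong refl) (simp add: algebra_simps power2_eq_square)
      also have "\<dots> = nsq r (y k) + 2 * t k * dotp r z (y k) + (t k)^2 * nsq r z"
        unfolding nsq_def dotp_def by (simp add: sum.distrib sum_distrib_left)
      also have "\<dots> = nsq r (y k) + 3 * (t k)^2" using z unfolding t_def by (simp add: power2_eq_square)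
      finally show ?thesis .
    qed
    have ypos: "nsq r (y k) > 0" if "k < q*r" for k unfolding y_def using pos[OF A0(1) that] .
    have termb: "ln (nsq r (mv r A1 (w k))) \<le> ln (nsq r (y k)) + 3 * ((t k)^2 / nsq r (y k))"
      if k: "k < q*r" for k
    proof -
      have yp: "nsq r (y k) > 0" using ypos[OF k] .
      have "nsq r (mv r A1 (w k)) = nsq r (y k) * (1 + 3 * ((t k)^2 / nsq r (y k)))"
        unfolding nsqA1 using yp by (simp add: field_simps)
      moreover have "1 + 3 * ((t k)^2 / nsq r (y k)) > 0" using yp by (simp add: add_pos_nonneg)
      ultimately have "ln (nsq r (mv r A1 (w k))) = ln (nsq r (y k)) + ln (1 + 3 * ((t k)^2 / nsq r (y k)))"
        using yp by (simp add: ln_mult_pos)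
      also have "ln (1 + 3 * ((t k)^2 / nsq r (y k))) \<le> 3 * ((t k)^2 / nsq r (y k))"
        by (rule ln_add_one_self_le_self) (use yp in simp)
      finally show ?thesis by simp
    qed
    define mu where "mu = (\<Sum>k<q*r. (t k)^2 / nsq r (y k))"
    have "F A1 \<le> F A0 + 3 * mu - real q * ln 4"
    proof -
      have s1: "(\<Sum>k<q*r. ln (nsq r (mv r A1 (w k)))) \<le> (\<Sum>k<q*r. ln (nsq r (y k))) + 3 * mu"
      proof -
        have "(\<Sum>k<q*r. ln (nsq r (mv r A1 (w k)))) \<le> (\<Sum>k<q*r. ln (nsq r (y k)) + 3 * ((t k)^2 / nsq r (y k)))"
          using termb by (intro sum_mono) auto
        also have "\<dots> = (\<Sum>k<q*r. ln (nsq r (y k))) + 3 * mu"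
          unfolding mu_def by (simp add: sum.distrib sum_distrib_left)
        finally show ?thesis .
      qed
      have "ln ((det A1)^2) = ln 4 + ln ((det A0)^2)" using dA1 dA0
        by (simp add: power_mult_distrib ln_mult)
      then show ?thesis using s1 unfolding F_def y_def by (simp add: algebra_simps)
    qed
    then have "m \<le> F A0 + 3 * mu - real q * ln 4" using mle by simp
    then have "real q * ln 4 - del < 3 * mu" using A0(2) by simp
    moreover have "real q * ln 4 - del \<ge> real q / 2"
      unfolding del_def using ln4_gt1 q by (simp add: mult_le_cancel_left1 less_imp_le)
    ultimately have "real q / 6 \<le> mu" by simp
    then show ?thesis unfolding mu_def t_def y_def .
  qed
  show ?thesis using A0c dA0 pos[OF A0(1)] iso by blast
qed


lemma finite_bad:
  fixes U :: "real mat"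
  assumes U: "U \<in> carrier_mat r r"
  shows "finite {e. det (U + e \<cdot>\<^sub>m 1\<^sub>m r) = 0}"
proof -
  have cp: "char_poly U \<noteq> 0" using degree_monic_char_poly[OF U] by auto
  have "{e. det (U + e \<cdot>\<^sub>m 1\<^sub>m r) = 0} \<subseteq> uminus ` {x. poly (char_poly U) x = 0}"
  proof
    fix e assume "e \<in> {e. det (U + e \<cdot>\<^sub>m 1\<^sub>m r) = 0}"
    then have "det (char_matrix U (-e)) = 0" unfolding char_matrix_def using U by simp
    then have "poly (char_poly U) (-e) = 0"
      using eigenvalue_det[OF U] eigenvalue_root_char_poly[OF U] by simp
    then show "e \<in> uminus ` {x. poly (char_poly U) x = 0}" by (intro image_eqI[of _ _ "-e"]) auto
  qed
  moreover have "finite (uminus ` {x. poly (char_poly U) x = 0})"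
    using poly_roots_finite[OF cp] by simp
  ultimately show ?thesis by (rule finite_subset)
qed

lemma inv_exists:
  fixes A :: "real mat"
  assumes A: "A \<in> carrier_mat r r" and dA: "det A \<noteq> 0"
  shows "\<exists>B\<in>carrier_mat r r. B * A = 1\<^sub>m r"
  using det_non_zero_imp_unit[OF A dA, unfolded Units_def, of "()"]
  by (auto simp: ring_mat_def)

lemma dotp_transfer:
  fixes A B :: "real mat"
  assumes A: "A \<in> carrier_mat r r" and B: "B \<in> carrier_mat r r" and BA: "B * A = 1\<^sub>m r"
  shows "dotp r (mv r A w) (mv r (transpose_mat B) v) = dotp r w v"
proof -
  have "dotp r (mv r A w) (mv r (transpose_mat B) v) =
     (\<Sum>a\<in>{0..<r}. (\<Sum>b\<in>{0..<r}. A$$(a,b) * w b) * (\<Sum>c\<in>{0..<r}. B$$(c,a) * v c))"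
    unfolding dotp_def mv_def using B by (intro sum.cong refl) (auto intro!: sum.cong)
  also have "\<dots> = (\<Sum>a\<in>{0..<r}. \<Sum>b\<in>{0..<r}. \<Sum>c\<in>{0..<r}. w b * v c * (B$$(c,a) * A$$(a,b)))"
    by (simp add: sum_distrib_left sum_distrib_right mult_ac)
  also have "\<dots> = (\<Sum>b\<in>{0..<r}. \<Sum>a\<in>{0..<r}. \<Sum>c\<in>{0..<r}. w b * v c * (B$$(c,a) * A$$(a,b)))"
    by (rule sum.swap)
  also have "\<dots> = (\<Sum>b\<in>{0..<r}. \<Sum>c\<in>{0..<r}. \<Sum>a\<in>{0..<r}. w b * v c * (B$$(c,a) * A$$(a,b)))"
    by (rule sum.cong[OF refl], rule sum.swap)
  also have "\<dots> = (\<Sum>b\<in>{0..<r}. \<Sum>c\<in>{0..<r}. w b * v c * (B * A)$$(c,b))"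
    using A B by (intro sum.cong refl) (simp add: scalar_prod_def sum_distrib_left)
  also have "\<dots> = (\<Sum>b\<in>{0..<r}. \<Sum>c\<in>{0..<r}. if c = b then w b * v b else 0)"
    unfolding BA by (intro sum.cong refl) auto
  also have "\<dots> = dotp r w v" unfolding dotp_def by simp
  finally show ?thesis .
qed


lemma two_mul_le: fixes a b t :: real assumes t: "t > 0" shows "a * b \<le> (t * a^2 + b^2 / t) / 2"
proof -
  have "0 \<le> (t * a - b)^2" by simp
  then have h: "2 * (a * b) * t \<le> (t*a)^2 + b^2" by (simp add: power2_diff algebra_simps)
  have e: "(t * a^2 + b^2 / t) / 2 = ((t*a)^2 + b^2) / (2*t)" using t by (simp add: field_simps power2_eq_square)
  show ?thesis unfolding e using h t by (simp add: pos_le_divide_eq mult_ac)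
qed

theorem signrank:
  fixes X :: "'x set" and Y :: "'y set" and H :: "'x \<Rightarrow> 'y \<Rightarrow> real"
    and u :: "'x \<Rightarrow> nat \<Rightarrow> real" and v :: "'y \<Rightarrow> nat \<Rightarrow> real" and r N :: nat
  assumes fX: "finite X" and fY: "finite Y" and cX: "card X = N" and cY: "card Y = N"
    and orth: "\<forall>y\<in>Y. \<forall>y'\<in>Y. (\<Sum>x\<in>X. H x y * H x y') = (if y = y' then real N else 0)"
    and Hpm: "\<forall>x\<in>X. \<forall>y\<in>Y. H x y = 1 \<or> H x y = -1"
    and sgn: "\<forall>x\<in>X. \<forall>y\<in>Y. H x y * dotp r (u x) (v y) > 0"
  shows "real N \<le> 37 * (real r)^2"
proof (cases "N = 0")
  case True then show ?thesis by simp
next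
  case Npos: False
  have Xne: "X \<noteq> {}" using cX Npos by auto
  have Yne: "Y \<noteq> {}" using cY Npos by auto
  obtain x0 where x0: "x0 \<in> X" using Xne by auto
  obtain y0 where y0: "y0 \<in> Y" using Yne by auto
  have r0: "r > 0"
  proof (rule ccontr)
    assume "\<not> r > 0" then have "r = 0" by simp
    then show False using sgn x0 y0 unfolding dotp_def by auto
  qed
  show ?thesis
  proof (cases "N < r")
    case True
    then have "real N \<le> real r" by simp
    also have "\<dots> \<le> (real r)^2" using r0 by (simp add: power2_eq_square)
    finally have "real N \<le> (real r)^2" .
    moreover have "(real r)^2 \<ge> 0" by simp
    ultimately show ?thesis by linarith
  next
    case False
    then have rN: "r \<le> N" by simp
    define q where "q = N div r"
    have q0: "q > 0" unfolding q_def using rN r0 by (simp add: div_greater_zero_iff)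
    have qrN: "q * r \<le> N" unfolding q_def by (simp add: div_times_less_eq_dividend)
    obtain e where e: "bij_betw e {0..<N} X" using ex_bij_betw_nat_finite[OF fX] cX by auto
    define xk where "xk k = e k" for k
    have xkX: "xk k \<in> X" if "k < q*r" for k
      using that qrN e unfolding xk_def bij_betw_def by auto
    have injxk: "inj_on xk {..<q*r}"
      using e qrN unfolding xk_def bij_betw_def by (auto intro: inj_on_subset)
    define u0 where "u0 k = u (xk k)" for k
    define Mset where "Mset = (\<lambda>(x,y,i). H x y * dotp r (u x) (v y) / (\<bar>v y i\<bar> + 1)) ` (X \<times> Y \<times> {0..<r})"
    have Mfin: "finite Mset" unfolding Mset_def using fX fY by simp
    have Mne: "Mset \<noteq> {}" unfolding Mset_def using x0 y0 r0 by auto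
    have Mpos: "\<forall>m\<in>Mset. m > 0" unfolding Mset_def using sgn
      by (auto intro!: divide_pos_pos simp: add_nonneg_pos)
    define mg where "mg = Min Mset"
    have mg0: "mg > 0" unfolding mg_def using Mfin Mne Mpos by simp
    have mgle: "mg * (\<bar>v y i\<bar> + 1) \<le> H x y * dotp r (u x) (v y)"
      if "x \<in> X" "y \<in> Y" "i < r" for x y i
    proof -
      have "H x y * dotp r (u x) (v y) / (\<bar>v y i\<bar> + 1) \<in> Mset"
        unfolding Mset_def using that by (intro image_eqI[of _ _ "(x,y,i)"]) auto
      then have "mg \<le> H x y * dotp r (u x) (v y) / (\<bar>v y i\<bar> + 1)"
        unfolding mg_def using Mfin by simp
      then show ?thesis by (simp add: pos_le_divide_eq add_nonneg_pos)
    qed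
    define Bad where "Bad = (\<Union>j<q. {ee. det (blk r u0 j + ee \<cdot>\<^sub>m 1\<^sub>m r) = 0})"
    have Badfin: "finite Bad" unfolding Bad_def by (intro finite_UN_I finite_bad) auto
    have "infinite ({0<..<mg} - Bad)" using Badfin mg0 by (simp add: Diff_infinite_finite)
    then obtain eps where eps: "eps \<in> {0<..<mg}" "eps \<notin> Bad" by (metis Diff_iff ex_in_conv finite.emptyI)
    define w where "w k a = u0 k a + (if a = k mod r then eps else 0)" for k a
    have blkw: "blk r w j = blk r u0 j + eps \<cdot>\<^sub>m 1\<^sub>m r" for j
    proof (rule eq_matI)
      fix a i assume "a < dim_row (blk r u0 j + eps \<cdot>\<^sub>m 1\<^sub>m r)" "i < dim_col (blk r u0 j + eps \<cdot>\<^sub>m 1\<^sub>m r)"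
      then have a: "a < r" and i: "i < r" by auto
      have "(j*r+i) mod r = i" using i by simp
      then show "blk r w j $$ (a, i) = (blk r u0 j + eps \<cdot>\<^sub>m 1\<^sub>m r) $$ (a, i)"
        using a i unfolding blk_def w_def by auto
    qed (auto simp: blk_def)
    have blkdet: "\<forall>j<q. det (blk r w j) \<noteq> 0"
      using eps(2) unfolding Bad_def blkw by auto
    have dotw: "dotp r (w k) (v y) = dotp r (u0 k) (v y) + eps * v y (k mod r)" for k y
    proof -
      have "dotp r (w k) (v y) = (\<Sum>a\<in>{0..<r}. u0 k a * v y a) + (\<Sum>a\<in>{0..<r}. if a = k mod r then eps * v y a else 0)"
    proof -
      have "dotp r (w k) (v y) = (\<Sum>a\<in>{0..<r}. u0 k a * v y a + (if a = k mod r then eps * v y a else 0))"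
        unfolding dotp_def w_def by (intro sum.cong refl) (simp add: distrib_right)
      then show ?thesis by (simp only: sum.distrib)
    qed
      also have "(\<Sum>a\<in>{0..<r}. if a = k mod r then eps * v y a else 0) = eps * v y (k mod r)"
        using r0 by simp
      finally show ?thesis unfolding dotp_def .
    qed
    have sgnw: "H (xk k) y * dotp r (w k) (v y) > 0" if k: "k < q*r" and y: "y \<in> Y" for k y
    proof -
      let ?i = "k mod r"
      have i: "?i < r" using r0 by simp
      have x: "xk k \<in> X" using xkX[OF k] .
      have m: "mg * (\<bar>v y ?i\<bar> + 1) \<le> H (xk k) y * dotp r (u0 k) (v y)"
        using mgle[OF x y i] unfolding u0_def .
      have "eps * (\<bar>v y ?i\<bar> + 1) < mg * (\<bar>v y ?i\<bar> + 1)"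
        using eps(1) by (intro mult_strict_right_mono) (auto simp: add_nonneg_pos)
      moreover have "H (xk k) y * (eps * v y ?i) \<ge> - (eps * \<bar>v y ?i\<bar>)"
      proof -
        have "H (xk k) y = 1 \<or> H (xk k) y = -1" using Hpm x y by blast
        moreover have "- (eps * \<bar>v y ?i\<bar>) \<le> eps * v y ?i" "- (eps * \<bar>v y ?i\<bar>) \<le> - (eps * v y ?i)"
          using eps(1) by (auto simp: abs_if)
        ultimately show ?thesis by auto
      qed
      moreover have "H (xk k) y * dotp r (w k) (v y) = H (xk k) y * dotp r (u0 k) (v y) + H (xk k) y * (eps * v y ?i)"
        unfolding dotw by (simp add: algebra_simps)
      moreover have "eps * \<bar>v y ?i\<bar> \<le> eps * (\<bar>v y ?i\<bar> + 1)" using eps(1) by simp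
      ultimately show ?thesis using m by linarith
    qed
    obtain A where A: "A \<in> carrier_mat r r" "det A \<noteq> 0" "\<forall>k<q*r. nsq r (mv r A (w k)) > 0"
      "\<forall>z. nsq r z = 1 \<longrightarrow> real q / 6 \<le> (\<Sum>k<q*r. (dotp r z (mv r A (w k)))^2 / nsq r (mv r A (w k)))"
      using isotropy[OF r0 q0 blkdet] by blast
    obtain B where B: "B \<in> carrier_mat r r" "B * A = 1\<^sub>m r" using inv_exists[OF A(1,2)] by blast
    define Yk where "Yk k = mv r A (w k)" for k
    define nk where "nk k = nsq r (Yk k)" for k
    define Zp where "Zp y = mv r (transpose_mat B) (v y)" for y
    define nz where "nz y = nsq r (Zp y)" for y
    have tr: "dotp r (Yk k) (Zp y) = dotp r (w k) (v y)" for k y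
      unfolding Yk_def Zp_def by (rule dotp_transfer[OF A(1) B])
    have nkpos: "nk k > 0" if "k < q*r" for k using A(3) that unfolding nk_def Yk_def by simp
    have nzpos: "nz y > 0" if y: "y \<in> Y" for y
    proof (rule ccontr)
      assume "\<not> nz y > 0"
      then have "nz y = 0" using nsq_nonneg[of r "Zp y"] unfolding nz_def by linarith
      then have "\<forall>a\<in>{0..<r}. Zp y a * Zp y a = 0"
        unfolding nz_def nsq_def by (subst sum_nonneg_eq_0_iff[symmetric]) auto
      then have "dotp r (Yk 0) (Zp y) = 0" unfolding dotp_def by simp
      then have "dotp r (w 0) (v y) = 0" using tr by simp
      then show False using sgnw[OF _ y, of 0] q0 r0 by simp
    qed
    define W where "W k a = Yk k a / sqrt (nk k)" for k a
    define Z where "Z y a = Zp y a / sqrt (nz y)" for y a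
    have nW: "nsq r (W k) = 1" if "k < q*r" for k
    proof -
      have "nsq r (W k) = nsq r (Yk k) / (sqrt (nk k))^2"
        unfolding nsq_def W_def by (simp add: sum_divide_distrib power2_eq_square)
      also have "\<dots> = 1" using nkpos[OF that] unfolding nk_def by simp
      finally show ?thesis .
    qed
    have nZ: "nsq r (Z y) = 1" if "y \<in> Y" for y
    proof -
      have "nsq r (Z y) = nsq r (Zp y) / (sqrt (nz y))^2"
        unfolding nsq_def Z_def by (simp add: sum_divide_distrib power2_eq_square)
      also have "\<dots> = 1" using nzpos[OF that] unfolding nz_def by simp
      finally show ?thesis .
    qed
    define D where "D k y = dotp r (W k) (Z y)" for k y
    have Dform: "D k y = dotp r (w k) (v y) / (sqrt (nk k) * sqrt (nz y))" for k y
    proof -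
      have "D k y = dotp r (Yk k) (Zp y) / (sqrt (nk k) * sqrt (nz y))"
        unfolding D_def W_def Z_def dotp_def by (simp add: sum_divide_distrib)
      then show ?thesis using tr[of k y] by simp
    qed
    have HDpos: "H (xk k) y * D k y > 0" if k: "k < q*r" and y: "y \<in> Y" for k y
    proof -
      have "H (xk k) y * (dotp r (w k) (v y) / (sqrt (nk k) * sqrt (nz y)))
          = (H (xk k) y * dotp r (w k) (v y)) / (sqrt (nk k) * sqrt (nz y))" by simp
      also have "\<dots> > 0" using sgnw[OF k y] nkpos[OF k] nzpos[OF y] by (intro divide_pos_pos) auto
      finally show ?thesis unfolding Dform .
    qed
    have Dabs: "\<bar>D k y\<bar> \<le> 1" if k: "k < q*r" and y: "y \<in> Y" for k y
    proof -
      have s1: "0 \<le> (\<Sum>a\<in>{0..<r}. (W k a - Z y a) * (W k a - Z y a))" by (intro sum_nonneg) auto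
      have s2: "0 \<le> (\<Sum>a\<in>{0..<r}. (W k a + Z y a) * (W k a + Z y a))" by (intro sum_nonneg) auto
      have e1: "(\<Sum>a\<in>{0..<r}. (W k a - Z y a) * (W k a - Z y a)) = nsq r (W k) + nsq r (Z y) - 2 * D k y"
        unfolding nsq_def D_def dotp_def by (simp add: algebra_simps sum.distrib sum_subtractf sum_distrib_left)
      have e2: "(\<Sum>a\<in>{0..<r}. (W k a + Z y a) * (W k a + Z y a)) = nsq r (W k) + nsq r (Z y) + 2 * D k y"
        unfolding nsq_def D_def dotp_def by (simp add: algebra_simps sum.distrib sum_distrib_left)
      show ?thesis using s1 s2 e1 e2 nW[OF k] nZ[OF y] by (simp add: abs_le_iff)
    qed
    have HDge: "H (xk k) y * D k y \<ge> (D k y)^2" if k: "k < q*r" and y: "y \<in> Y" for k y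
    proof -
      have "H (xk k) y * D k y = \<bar>D k y\<bar>"
      proof -
        have "H (xk k) y = 1 \<or> H (xk k) y = -1" using Hpm xkX[OF k] y by blast
        then show ?thesis using HDpos[OF k y] by (auto simp: abs_if)
      qed
      moreover have "(D k y)^2 \<le> \<bar>D k y\<bar>"
      proof -
        have "(D k y)^2 = \<bar>D k y\<bar> * \<bar>D k y\<bar>" by (simp add: power2_eq_square)
        also have "\<dots> \<le> 1 * \<bar>D k y\<bar>" using Dabs[OF k y] by (intro mult_right_mono) auto
        finally show ?thesis by simp
      qed
      ultimately show ?thesis by simp
    qed
    have isoD: "real q / 6 \<le> (\<Sum>k<q*r. (D k y)^2)" if y: "y \<in> Y" for y
    proof -
      have "real q / 6 \<le> (\<Sum>k<q*r. (dotp r (Z y) (Yk k))^2 / nk k)"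
        using A(4) nZ[OF y] unfolding Yk_def nk_def by blast
      also have "\<dots> = (\<Sum>k<q*r. (D k y)^2)"
      proof (rule sum.cong[OF refl])
        fix k assume k: "k \<in> {..<q*r}"
        have "dotp r (Z y) (Yk k) = dotp r (Yk k) (Zp y) / sqrt (nz y)"
          unfolding Z_def dotp_def by (simp add: sum_divide_distrib mult.commute)
        moreover have "D k y = dotp r (Yk k) (Zp y) / (sqrt (nk k) * sqrt (nz y))"
          unfolding Dform tr ..
        ultimately show "(dotp r (Z y) (Yk k))^2 / nk k = (D k y)^2"
          using nkpos[of k] k nzpos[OF y] by (simp add: power_divide power_mult_distrib)
      qed
      finally show ?thesis .
    qed
    define L where "L = (\<Sum>y\<in>Y. \<Sum>k<q*r. H (xk k) y * D k y)"
    have LB: "real N * (real q / 6) \<le> L"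
    proof -
      have "real N * (real q / 6) = (\<Sum>y\<in>Y. real q / 6)" using cY by simp
      also have "\<dots> \<le> (\<Sum>y\<in>Y. \<Sum>k<q*r. (D k y)^2)" using isoD by (intro sum_mono) auto
      also have "\<dots> \<le> L" unfolding L_def using HDge by (intro sum_mono) auto
      finally show ?thesis .
    qed
    define G where "G x a = (\<Sum>y\<in>Y. H x y * Z y a)" for x a
    have Lsw: "L = (\<Sum>k<q*r. \<Sum>a\<in>{0..<r}. W k a * G (xk k) a)"
    proof -
      have "L = (\<Sum>y\<in>Y. \<Sum>k<q*r. \<Sum>a\<in>{0..<r}. H (xk k) y * (W k a * Z y a))"
        unfolding L_def D_def dotp_def by (simp add: sum_distrib_left)
      also have "\<dots> = (\<Sum>k<q*r. \<Sum>y\<in>Y. \<Sum>a\<in>{0..<r}. H (xk k) y * (W k a * Z y a))"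
        by (rule sum.swap)
      also have "\<dots> = (\<Sum>k<q*r. \<Sum>a\<in>{0..<r}. \<Sum>y\<in>Y. H (xk k) y * (W k a * Z y a))"
        by (rule sum.cong[OF refl], rule sum.swap)
      also have "\<dots> = (\<Sum>k<q*r. \<Sum>a\<in>{0..<r}. W k a * G (xk k) a)"
        unfolding G_def by (simp add: sum_distrib_left mult_ac)
      finally show ?thesis .
    qed
    define gx where "gx x = (\<Sum>a\<in>{0..<r}. (G x a)^2)" for x
    have gxnn: "gx x \<ge> 0" for x unfolding gx_def by (intro sum_nonneg) auto
    have sumG: "(\<Sum>x\<in>X. gx x) = real N * real N"
    proof -
      have "(\<Sum>x\<in>X. gx x) = (\<Sum>x\<in>X. \<Sum>a\<in>{0..<r}. \<Sum>y\<in>Y. \<Sum>y'\<in>Y. (H x y * H x y') * (Z y a * Z y' a))"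
        unfolding gx_def G_def by (simp add: power2_eq_square sum_product mult_ac)
      also have "\<dots> = (\<Sum>a\<in>{0..<r}. \<Sum>x\<in>X. \<Sum>y\<in>Y. \<Sum>y'\<in>Y. (H x y * H x y') * (Z y a * Z y' a))"
        by (rule sum.swap)
      also have "\<dots> = (\<Sum>a\<in>{0..<r}. \<Sum>y\<in>Y. \<Sum>y'\<in>Y. (\<Sum>x\<in>X. H x y * H x y') * (Z y a * Z y' a))"
      proof (rule sum.cong[OF refl])
        fix a
        have "(\<Sum>x\<in>X. \<Sum>y\<in>Y. \<Sum>y'\<in>Y. (H x y * H x y') * (Z y a * Z y' a))
            = (\<Sum>y\<in>Y. \<Sum>x\<in>X. \<Sum>y'\<in>Y. (H x y * H x y') * (Z y a * Z y' a))" by (rule sum.swap)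
        also have "\<dots> = (\<Sum>y\<in>Y. \<Sum>y'\<in>Y. \<Sum>x\<in>X. (H x y * H x y') * (Z y a * Z y' a))"
          by (rule sum.cong[OF refl], rule sum.swap)
        also have "\<dots> = (\<Sum>y\<in>Y. \<Sum>y'\<in>Y. (\<Sum>x\<in>X. H x y * H x y') * (Z y a * Z y' a))"
          by (simp add: sum_distrib_right)
        finally show "(\<Sum>x\<in>X. \<Sum>y\<in>Y. \<Sum>y'\<in>Y. (H x y * H x y') * (Z y a * Z y' a))
            = (\<Sum>y\<in>Y. \<Sum>y'\<in>Y. (\<Sum>x\<in>X. H x y * H x y') * (Z y a * Z y' a))" .
      qed
      also have "\<dots> = (\<Sum>a\<in>{0..<r}. \<Sum>y\<in>Y. \<Sum>y'\<in>Y. (if y = y' then real N * (Z y a * Z y a) else 0))"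
        using orth by (intro sum.cong refl) auto
      also have "\<dots> = (\<Sum>a\<in>{0..<r}. \<Sum>y\<in>Y. real N * (Z y a * Z y a))"
        using fY by (simp add: sum.delta)
      also have "\<dots> = real N * (\<Sum>y\<in>Y. nsq r (Z y))"
        unfolding nsq_def by (simp add: sum_distrib_left sum.swap[of _ "{0..<r}"])
      also have "\<dots> = real N * real N" using nZ cY by simp
      finally show ?thesis .
    qed
    have SG: "(\<Sum>k<q*r. gx (xk k)) \<le> real N * real N"
    proof -
      have "(\<Sum>k<q*r. gx (xk k)) = (\<Sum>x\<in>xk ` {..<q*r}. gx x)"
        using injxk by (simp add: sum.reindex)
      also have "\<dots> \<le> (\<Sum>x\<in>X. gx x)"
        using xkX fX gxnn by (intro sum_mono2) auto
      finally show ?thesis using sumG by simp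
    qed
    define t where "t = real N / (6 * real r)"
    have t0: "t > 0" unfolding t_def using Npos r0 by simp
    have UB: "L \<le> (t * real (q*r) + real N * real N / t) / 2"
    proof -
      have "L \<le> (\<Sum>k<q*r. \<Sum>a\<in>{0..<r}. (t * (W k a)^2 + (G (xk k) a)^2 / t) / 2)"
        unfolding Lsw using two_mul_le[OF t0] by (intro sum_mono) auto
      also have "\<dots> = (t * (\<Sum>k<q*r. nsq r (W k)) + (\<Sum>k<q*r. gx (xk k)) / t) / 2"
        unfolding nsq_def gx_def
        by (simp add: sum.distrib sum_distrib_left sum_divide_distrib power2_eq_square add_divide_distrib)
      also have "(\<Sum>k<q*r. nsq r (W k)) = real (q*r)" using nW by simp
      also have "(t * real (q*r) + (\<Sum>k<q*r. gx (xk k)) / t) / 2 \<le> (t * real (q*r) + real N * real N / t) / 2"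
        using SG t0 by (simp add: divide_right_mono)
      finally show ?thesis .
    qed
    have "real N * (real q / 6) \<le> (t * real (q*r) + real N * real N / t) / 2" using LB UB by (rule order_trans)
    also have "t * real (q*r) = real N * real q / 6" unfolding t_def using r0 by simp
    also have "real N * real N / t = 6 * real N * real r" unfolding t_def using r0 Npos by simp
    finally have "real N * (real q / 6) \<le> (real N * real q / 6 + 6 * real N * real r) / 2" .
    then have "real N * real q \<le> real N * (36 * real r)" by (simp add: field_simps)
    then have q36: "real q \<le> 36 * real r" using Npos by simp
    have "N < q * r + r" unfolding q_def using r0
      by (metis add.commute div_mult_mod_eq mod_less_divisor nat_add_left_cancel_less)
    then have "real N < real q * real r + real r" by (metis of_nat_add of_nat_less_iff of_nat_mult)
    also have "\<dots> \<le> 36 * real r * real r + real r" using q36 by (simp add: mult_right_mono)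
    also have "\<dots> \<le> 37 * (real r)^2" using r0 by (simp add: power2_eq_square)
    finally show ?thesis by simp
  qed
qed


definition Hs :: "nat set \<Rightarrow> nat set \<Rightarrow> real" where
  "Hs S T = (if odd (card (S \<inter> T)) then 1 else -1)"

lemma parity_flip:
  assumes fS: "finite S" and z: "z \<in> T"
  shows "odd (card ((S - {z} \<union> ({z} - S)) \<inter> T)) \<longleftrightarrow> \<not> odd (card (S \<inter> T))"
proof (cases "z \<in> S")
  case True
  have "(S - {z} \<union> ({z} - S)) \<inter> T = (S \<inter> T) - {z}" using True by auto
  moreover have "card ((S \<inter> T) - {z}) = card (S \<inter> T) - 1" using True z fS by simp
  moreover have "card (S \<inter> T) \<ge> 1" using True z fS by (metis Int_iff card_0_eq finite_Int empty_iff less_one not_le)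
  ultimately show ?thesis by auto
next
  case False
  have "(S - {z} \<union> ({z} - S)) \<inter> T = insert z (S \<inter> T)" using False z by auto
  moreover have "card (insert z (S \<inter> T)) = Suc (card (S \<inter> T))" using False fS by simp
  ultimately show ?thesis by auto
qed

lemma parity_same:
  assumes z: "z \<notin> T"
  shows "(S - {z} \<union> ({z} - S)) \<inter> T = S \<inter> T"
  using z by auto

lemma Hs_orth:
  assumes y: "Y1 \<subseteq> {0..<n}" and y': "Y2 \<subseteq> {0..<n}"
  shows "(\<Sum>X\<in>Pow {0..<n}. Hs X Y1 * Hs X Y2) = (if Y1 = Y2 then real (2^n) else 0)"
proof (cases "Y1 = Y2")
  case True
  have "(\<Sum>X\<in>Pow {0..<n}. Hs X Y1 * Hs X Y2) = (\<Sum>X\<in>Pow {0..<n}. 1)"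
    using True by (intro sum.cong) (auto simp: Hs_def)
  also have "\<dots> = real (2^n)" by (simp add: card_Pow)
  finally show ?thesis using True by simp
next
  case False
  then obtain z where z: "z \<in> (Y1 - Y2) \<union> (Y2 - Y1)" by blast
  have zn: "z \<in> {0..<n}" using z y y' by auto
  define fl where "fl X = X - {z} \<union> ({z} - X)" for X :: "nat set"
  define h where "h X = Hs X Y1 * Hs X Y2" for X
  have flfl: "fl (fl X) = X" for X unfolding fl_def by auto
  have bij: "bij_betw fl (Pow {0..<n}) (Pow {0..<n})"
    by (rule bij_betw_byWitness[of _ fl]) (use zn flfl in \<open>auto simp: fl_def\<close>)
  have neg: "h (fl X) = - h X" if "X \<in> Pow {0..<n}" for X
  proof -
    have fX: "finite X" using that finite_subset by auto
    show ?thesis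
    proof (cases "z \<in> Y1")
      case True
      then have "z \<notin> Y2" using z by auto
      then show ?thesis using parity_flip[OF fX True] parity_same[of z Y2 X]
        unfolding h_def Hs_def fl_def by auto
    next
      case False
      then have "z \<in> Y2" using z by auto
      then show ?thesis using parity_flip[OF fX, of z Y2] parity_same[OF False, of X]
        unfolding h_def Hs_def fl_def by auto
    qed
  qed
  have "(\<Sum>X\<in>Pow {0..<n}. h X) = (\<Sum>X\<in>Pow {0..<n}. h (fl X))"
    using sum.reindex_bij_betw[OF bij, of h] by simp
  also have "\<dots> = - (\<Sum>X\<in>Pow {0..<n}. h X)" using neg by (simp add: sum_negf)
  finally have "(\<Sum>X\<in>Pow {0..<n}. h X) = 0" by simp
  then show ?thesis using False unfolding h_def by simp
qed

definition cpt :: "nat \<Rightarrow> nat set \<Rightarrow> nat set \<Rightarrow> nat \<Rightarrow> real" where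
  "cpt n S T = (\<lambda>i. if i < n then (if i \<in> S then 1 else 0) else if i < 2*n then (if i - n \<in> T then 1 else 0) else 0)"

lemma cpt_cube: "cpt n S T \<in> bool_cube (2*n)"
  unfolding bool_cube_def cpt_def by auto

lemma IP_cpt:
  assumes "S \<subseteq> {0..<n}" "T \<subseteq> {0..<n}"
  shows "IP n (cpt n S T) \<longleftrightarrow> odd (card (S \<inter> T))"
proof -
  have "{i. i < n \<and> cpt n S T i = 1 \<and> cpt n S T (n + i) = 1} = S \<inter> T"
    using assms unfolding cpt_def by auto
  then show ?thesis unfolding IP_def by simp
qed


lemma sum_less_card:
  fixes f :: "'a \<Rightarrow> real"
  assumes fA: "finite A" and fB: "finite B" and c: "card A = card B" and ne: "A \<noteq> {}"
    and lt: "\<forall>a\<in>A. \<forall>b\<in>B. f a < f b"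
  shows "sum f A < sum f B"
proof -
  define M where "M = Max (f ` A)"
  have MA: "\<forall>a\<in>A. f a \<le> M" unfolding M_def using fA by simp
  have MB: "\<forall>b\<in>B. M < f b"
  proof
    fix b assume b: "b \<in> B"
    have "M \<in> f ` A" unfolding M_def using fA ne by simp
    then show "M < f b" using lt b by auto
  qed
  have Bne: "B \<noteq> {}" using c ne fA fB by auto
  have "sum f A \<le> (\<Sum>a\<in>A. M)" using MA by (intro sum_mono) auto
  also have "\<dots> = (\<Sum>b\<in>B. M)" using c by simp
  also have "\<dots> < sum f B" using MB fB Bne by (intro sum_strict_mono) auto
  finally show ?thesis .
qed

definition sqd :: "nat \<Rightarrow> (nat \<Rightarrow> real) \<Rightarrow> (nat \<Rightarrow> real) \<Rightarrow> real" where
  "sqd m a p = (\<Sum>i<m. (a i - p i)^2)"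

lemma edist_sqd: "edist m a p = sqrt (sqd m a p)" unfolding edist_def sqd_def by simp

definition xv :: "nat set \<Rightarrow> nat \<Rightarrow> real" where
  "xv S i = (if i \<in> S then 1 else 0)"

lemma sqd_split:
  "sqd (2*n) (cpt n S T) p = (\<Sum>i<n. (xv S i - p i)^2) + (\<Sum>i<n. (xv T i - p (n+i))^2)"
proof -
  have U: "{..<2*n} = {..<n} \<union> (\<lambda>i. n+i) ` {..<n}"
  proof
    show "{..<2*n} \<subseteq> {..<n} \<union> (\<lambda>i. n+i) ` {..<n}"
    proof
      fix i assume "i \<in> {..<2*n}"
      then show "i \<in> {..<n} \<union> (\<lambda>i. n+i) ` {..<n}"
        by (cases "i < n") (auto intro!: image_eqI[of _ _ "i - n"])
    qed
  qed auto
  have D: "{..<n} \<inter> (\<lambda>i. n+i) ` {..<n} = {}" by auto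
  have "sqd (2*n) (cpt n S T) p = (\<Sum>i<n. (cpt n S T i - p i)^2) + (\<Sum>i\<in>(\<lambda>i. n+i) ` {..<n}. (cpt n S T i - p i)^2)"
    unfolding sqd_def U by (rule sum.union_disjoint) (use D in auto)
  also have "(\<Sum>i\<in>(\<lambda>i. n+i) ` {..<n}. (cpt n S T i - p i)^2) = (\<Sum>i<n. (cpt n S T (n+i) - p (n+i))^2)"
    by (subst sum.reindex) (auto simp: inj_on_def)
  also have "(\<Sum>i<n. (cpt n S T (n+i) - p (n+i))^2) = (\<Sum>i<n. (xv T i - p (n+i))^2)"
    by (intro sum.cong) (auto simp: cpt_def xv_def)
  also have "(\<Sum>i<n. (cpt n S T i - p i)^2) = (\<Sum>i<n. (xv S i - p i)^2)"
    by (intro sum.cong) (auto simp: cpt_def xv_def)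
  finally show ?thesis .
qed


theorem knn_signrep:
  fixes n k :: nat and P N :: "(nat \<Rightarrow> real) set"
  assumes k: "k \<ge> 1" and rep: "is_kNN_rep k (2*n) (IP n) P N"
  shows "real (2^n) \<le> 37 * (real (card (P \<union> N) choose k))^2"
proof -
  define PN where "PN = P \<union> N"
  have fPN: "finite PN" using rep unfolding is_kNN_rep_def PN_def by auto
  define Ks where "Ks = {T. T \<subseteq> PN \<and> card T = k}"
  have fKs: "finite Ks" unfolding Ks_def using fPN by simp
  define r where "r = card Ks"
  have r_eq: "r = card PN choose k" unfolding r_def Ks_def using n_subsets[OF fPN] by simp
  obtain g where g: "bij_betw g {0..<r} Ks" using ex_bij_betw_nat_finite[OF fKs] r_def by auto
  define good where "good a S \<longleftrightarrow> S \<subseteq> PN \<and> card S = k \<and>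
        (\<forall>s\<in>S. \<forall>t\<in>PN - S. edist (2*n) a s < edist (2*n) a t) \<and>
        (IP n a \<longleftrightarrow> real (card (S \<inter> P)) \<ge> real k / 2)" for a S
  define Sa where "Sa a = (SOME S. good a S)" for a
  have Sa: "good a (Sa a)" if "a \<in> bool_cube (2*n)" for a
  proof -
    have "\<exists>S. good a S" using rep that unfolding is_kNN_rep_def good_def PN_def by blast
    then show ?thesis unfolding Sa_def by (rule someI_ex)
  qed
  have SaK: "Sa a \<in> Ks" if "a \<in> bool_cube (2*n)" for a using Sa[OF that] unfolding good_def Ks_def by auto
  have gt: "(\<Sum>p\<in>T. sqd (2*n) a p) > (\<Sum>p\<in>Sa a. sqd (2*n) a p)"
    if a: "a \<in> bool_cube (2*n)" and T: "T \<in> Ks" and TS: "T \<noteq> Sa a" for a T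
  proof -
    let ?S = "Sa a"
    have gS: "good a ?S" using Sa[OF a] .
    have fT: "finite T" and fS: "finite ?S" using T gS fPN unfolding Ks_def good_def
      by (auto intro: finite_subset)
    have cT: "card T = k" and cS: "card ?S = k" using T gS unfolding Ks_def good_def by auto
    have c1: "card (T - ?S) = card (?S - T)"
    proof -
      have "card (T - ?S) = card T - card (T \<inter> ?S)" using fT by (simp add: card_Diff_subset_Int)
      moreover have "card (?S - T) = card ?S - card (?S \<inter> T)" using fS by (simp add: card_Diff_subset_Int)
      ultimately show ?thesis using cT cS by (simp add: Int_commute)
    qed
    have ne: "?S - T \<noteq> {}"
    proof
      assume "?S - T = {}"
      then have "?S \<subseteq> T" by auto
      then have "?S = T" using fT cT cS by (simp add: card_subset_eq)
      then show False using TS by simp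
    qed
    have lt: "\<forall>p\<in>?S - T. \<forall>t\<in>T - ?S. sqd (2*n) a p < sqd (2*n) a t"
    proof (intro ballI)
      fix p t assume p: "p \<in> ?S - T" and t: "t \<in> T - ?S"
      have "t \<in> PN - ?S" using t T unfolding Ks_def by auto
      then have "edist (2*n) a p < edist (2*n) a t" using gS p unfolding good_def by auto
      then show "sqd (2*n) a p < sqd (2*n) a t" unfolding edist_sqd by simp
    qed
    have "(\<Sum>p\<in>?S - T. sqd (2*n) a p) < (\<Sum>p\<in>T - ?S. sqd (2*n) a p)"
      by (rule sum_less_card) (use fS fT c1 ne lt in auto)
    moreover have "(\<Sum>p\<in>T. sqd (2*n) a p) = (\<Sum>p\<in>T - ?S. sqd (2*n) a p) + (\<Sum>p\<in>T \<inter> ?S. sqd (2*n) a p)"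
    proof -
      have "(\<Sum>p\<in>T. sqd (2*n) a p) = (\<Sum>p\<in>T - (T \<inter> ?S). sqd (2*n) a p) + (\<Sum>p\<in>T \<inter> ?S. sqd (2*n) a p)"
        by (rule sum.subset_diff) (use fT in auto)
      moreover have "T - (T \<inter> ?S) = T - ?S" by auto
      ultimately show ?thesis by simp
    qed
    moreover have "(\<Sum>p\<in>?S. sqd (2*n) a p) = (\<Sum>p\<in>?S - T. sqd (2*n) a p) + (\<Sum>p\<in>T \<inter> ?S. sqd (2*n) a p)"
    proof -
      have "(\<Sum>p\<in>?S. sqd (2*n) a p) = (\<Sum>p\<in>?S - (T \<inter> ?S). sqd (2*n) a p) + (\<Sum>p\<in>T \<inter> ?S. sqd (2*n) a p)"
        by (rule sum.subset_diff) (use fS in auto)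
      moreover have "?S - (T \<inter> ?S) = ?S - T" by auto
      ultimately show ?thesis by simp
    qed
    ultimately show ?thesis by simp
  qed
  define Cube where "Cube = (\<lambda>(S,T). cpt n S T) ` (Pow {0..<n} \<times> Pow {0..<n})"
  have fCube: "finite Cube" unfolding Cube_def by simp
  have Cube_sub: "Cube \<subseteq> bool_cube (2*n)" unfolding Cube_def using cpt_cube by auto
  define Dset where "Dset = (\<lambda>(a,T). (\<Sum>p\<in>T. sqd (2*n) a p) - (\<Sum>p\<in>Sa a. sqd (2*n) a p)) `
      {(a,T). a \<in> Cube \<and> T \<in> Ks \<and> T \<noteq> Sa a}"
  have fD: "finite Dset" unfolding Dset_def
    by (rule finite_imageI, rule finite_subset[of _ "Cube \<times> Ks"]) (use fCube fKs in auto)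
  define g0 where "g0 = Min (insert 1 Dset)"
  have g0pos: "g0 > 0" unfolding g0_def using fD
  proof (subst Min_gr_iff)
    show "\<forall>x\<in>insert 1 Dset. 0 < x" unfolding Dset_def using gt Cube_sub by auto
  qed auto
  have g0le: "(\<Sum>p\<in>T. sqd (2*n) a p) - (\<Sum>p\<in>Sa a. sqd (2*n) a p) \<ge> g0"
    if "a \<in> Cube" "T \<in> Ks" "T \<noteq> Sa a" for a T
  proof -
    have "(\<Sum>p\<in>T. sqd (2*n) a p) - (\<Sum>p\<in>Sa a. sqd (2*n) a p) \<in> insert 1 Dset"
      unfolding Dset_def using that by (intro insertI2 image_eqI[of _ _ "(a,T)"]) auto
    then show ?thesis unfolding g0_def using fD by simp
  qed
  have c0: "cpt n {} {} \<in> Cube" unfolding Cube_def by (intro image_eqI[of _ _ "({},{})"]) auto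
  have r0: "r > 0" unfolding r_def using SaK[of "cpt n {} {}"] c0 Cube_sub fKs
    by (auto simp: card_gt_0_iff)
  define lam where "lam = (ln (real r) + 1) / g0"
  have elam: "exp (- (lam * g0)) = exp (-1) / real r"
  proof -
    have lg: "lam * g0 = ln (real r) + 1" unfolding lam_def using g0pos by simp
    have "- (lam * g0) = -1 - ln (real r)" unfolding lg by simp
    then have "exp (- (lam * g0)) = exp (-1) / exp (ln (real r))" by (simp add: exp_diff)
    also have "exp (ln (real r)) = real r" using r0 by simp
    finally show ?thesis .
  qed
  define sig where "sig T = (if real (card (T \<inter> P)) \<ge> real k / 2 then 1 else (-1::real))" for T
  define u where "u S j = (\<Prod>p\<in>g j. exp (- lam * (\<Sum>i<n. (xv S i - p i)^2)))" for S j
  define v where "v T j = sig (g j) * (\<Prod>p\<in>g j. exp (- lam * (\<Sum>i<n. (xv T i - p (n+i))^2)))" for T j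
  define E where "E a T = exp (- lam * (\<Sum>p\<in>T. sqd (2*n) a p))" for a T
  have gK: "g j \<in> Ks" if "j < r" for j using g that unfolding bij_betw_def by auto
  have fgj: "finite (g j)" if "j < r" for j using gK[OF that] fPN unfolding Ks_def by (auto intro: finite_subset)
  have uv: "u S j * v T j = sig (g j) * E (cpt n S T) (g j)" if j: "j < r" for S T j
  proof -
    have "u S j * v T j = sig (g j) * ((\<Prod>p\<in>g j. exp (- lam * (\<Sum>i<n. (xv S i - p i)^2))) *
          (\<Prod>p\<in>g j. exp (- lam * (\<Sum>i<n. (xv T i - p (n+i))^2))))"
      unfolding u_def v_def by (simp add: mult_ac)
    also have "(\<Prod>p\<in>g j. exp (- lam * (\<Sum>i<n. (xv S i - p i)^2))) *
          (\<Prod>p\<in>g j. exp (- lam * (\<Sum>i<n. (xv T i - p (n+i))^2)))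
        = (\<Prod>p\<in>g j. exp (- lam * sqd (2*n) (cpt n S T) p))"
      unfolding prod.distrib[symmetric] sqd_split by (intro prod.cong refl) (simp add: exp_add[symmetric] distrib_left)
    also have "\<dots> = E (cpt n S T) (g j)"
      unfolding E_def using fgj[OF j] by (simp add: exp_sum sum_distrib_left)
    finally show ?thesis .
  qed
  have dot: "dotp r (u S) (v T) = (\<Sum>T'\<in>Ks. sig T' * E (cpt n S T) T')" for S T
  proof -
    have "dotp r (u S) (v T) = (\<Sum>j\<in>{0..<r}. sig (g j) * E (cpt n S T) (g j))"
      unfolding dotp_def using uv by (intro sum.cong) auto
    also have "\<dots> = (\<Sum>T'\<in>Ks. sig T' * E (cpt n S T) T')"
      using sum.reindex_bij_betw[OF g, of "\<lambda>T'. sig T' * E (cpt n S T) T'"] by simp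
    finally show ?thesis .
  qed
  have sgn: "Hs S T * dotp r (u S) (v T) > 0" if S: "S \<in> Pow {0..<n}" and T: "T \<in> Pow {0..<n}" for S T
  proof -
    define a where "a = cpt n S T"
    have aC: "a \<in> Cube" unfolding a_def Cube_def using S T by auto
    have acube: "a \<in> bool_cube (2*n)" using aC Cube_sub by auto
    define S0 where "S0 = Sa a"
    have S0K: "S0 \<in> Ks" unfolding S0_def using SaK[OF acube] .
    have HS: "Hs S T = sig S0"
    proof -
      have "IP n a \<longleftrightarrow> odd (card (S \<inter> T))" unfolding a_def using IP_cpt S T by auto
      moreover have "IP n a \<longleftrightarrow> real (card (S0 \<inter> P)) \<ge> real k / 2"
        using Sa[OF acube] unfolding good_def S0_def by auto
      ultimately show ?thesis unfolding Hs_def sig_def by auto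
    qed
    have sig2: "sig S0 * sig S0 = 1" unfolding sig_def by auto
    have sigpm: "\<bar>sig T'\<bar> = 1" for T' unfolding sig_def by auto
    have Epos: "E a T' > 0" for T' unfolding E_def by simp
    have Ele: "E a T' \<le> exp (- (lam * g0)) * E a S0" if T': "T' \<in> Ks - {S0}" for T'
    proof -
      have "(\<Sum>p\<in>T'. sqd (2*n) a p) - (\<Sum>p\<in>S0. sqd (2*n) a p) \<ge> g0"
        using g0le[OF aC] T' unfolding S0_def by auto
      moreover have "lam > 0" unfolding lam_def using g0pos r0 by (simp add: add_nonneg_pos)
      ultimately have "lam * g0 \<le> lam * ((\<Sum>p\<in>T'. sqd (2*n) a p) - (\<Sum>p\<in>S0. sqd (2*n) a p))"
        by (intro mult_left_mono) auto
      then have "lam * g0 \<le> lam * (\<Sum>p\<in>T'. sqd (2*n) a p) - lam * (\<Sum>p\<in>S0. sqd (2*n) a p)"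
        by (simp only: right_diff_distrib)
      then have "- lam * (\<Sum>p\<in>T'. sqd (2*n) a p) \<le> - (lam * g0) + - lam * (\<Sum>p\<in>S0. sqd (2*n) a p)"
        by simp
      then show ?thesis unfolding E_def by (simp add: exp_add[symmetric])
    qed
    have "dotp r (u S) (v T) = sig S0 * E a S0 + (\<Sum>T'\<in>Ks - {S0}. sig T' * E a T')"
      unfolding dot a_def[symmetric] using fKs S0K by (simp add: sum.remove)
    then have "Hs S T * dotp r (u S) (v T) = (sig S0 * sig S0) * E a S0 + (\<Sum>T'\<in>Ks - {S0}. sig S0 * sig T' * E a T')"
      unfolding HS by (simp add: distrib_left sum_distrib_left mult.assoc)
    then have "Hs S T * dotp r (u S) (v T) = E a S0 + (\<Sum>T'\<in>Ks - {S0}. sig S0 * sig T' * E a T')"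
      unfolding sig2 by simp
    also have "\<dots> \<ge> E a S0 - (\<Sum>T'\<in>Ks - {S0}. exp (- (lam * g0)) * E a S0)"
    proof -
      have "(\<Sum>T'\<in>Ks - {S0}. sig S0 * sig T' * E a T') \<ge> (\<Sum>T'\<in>Ks - {S0}. - (exp (- (lam * g0)) * E a S0))"
      proof (intro sum_mono)
        fix T' assume T': "T' \<in> Ks - {S0}"
        have "sig S0 * sig T' * E a T' \<ge> - E a T'"
          using Epos[of T'] unfolding sig_def by auto
        then show "- (exp (- (lam * g0)) * E a S0) \<le> sig S0 * sig T' * E a T'" using Ele[OF T'] by linarith
      qed
      then show ?thesis by (simp add: sum_negf)
    qed
    finally have low: "Hs S T * dotp r (u S) (v T) \<ge> E a S0 * (1 - real (r - 1) * exp (- (lam * g0)))"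
    proof -
      assume h: "E a S0 - (\<Sum>T'\<in>Ks - {S0}. exp (- (lam * g0)) * E a S0) \<le> Hs S T * dotp r (u S) (v T)"
      have "card (Ks - {S0}) = r - 1" unfolding r_def using S0K fKs by simp
      then have "(\<Sum>T'\<in>Ks - {S0}. exp (- (lam * g0)) * E a S0) = real (r - 1) * (exp (- (lam * g0)) * E a S0)"
        by simp
      moreover have "E a S0 * (1 - real (r - 1) * exp (- (lam * g0))) = E a S0 - real (r - 1) * (exp (- (lam * g0)) * E a S0)"
        by (simp add: right_diff_distrib mult_ac)
      ultimately show ?thesis using h by linarith
    qed
    have "real (r - 1) * exp (- (lam * g0)) < 1"
    proof -
      have "real (r - 1) * exp (- (lam * g0)) = real (r - 1) * exp (-1) / real r" using elam by simp
      also have "\<dots> < 1"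
      proof -
        have "exp (-1::real) < 1" by simp
        then have "real (r - 1) * exp (-1) \<le> real (r-1)" by (simp add: mult_left_le)
        also have "\<dots> < real r" using r0 by simp
        finally show ?thesis using r0 by simp
      qed
      finally show ?thesis .
    qed
    then have "E a S0 * (1 - real (r - 1) * exp (- (lam * g0))) > 0" using Epos[of S0] by simp
    then show ?thesis using low by linarith
  qed
  have "real (2^n) \<le> 37 * (real r)^2"
  proof (rule signrank[of "Pow {0..<n}" "Pow {0..<n}" "2^n" Hs r u v])
    show "\<forall>y\<in>Pow {0..<n}. \<forall>y'\<in>Pow {0..<n}. (\<Sum>x\<in>Pow {0..<n}. Hs x y * Hs x y') = (if y = y' then real (2^n) else 0)"
      using Hs_orth by auto
    show "\<forall>x\<in>Pow {0..<n}. \<forall>y\<in>Pow {0..<n}. Hs x y = 1 \<or> Hs x y = -1" unfolding Hs_def by auto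
    show "\<forall>x\<in>Pow {0..<n}. \<forall>y\<in>Pow {0..<n}. Hs x y * dotp r (u x) (v y) > 0" using sgn by auto
  qed (auto simp: card_Pow)
  then show ?thesis using r_eq PN_def by simp
qed


lemma cube_finite: "finite (bool_cube m)"
proof (rule finite_subset)
  show "bool_cube m \<subseteq> (\<lambda>S i. if i \<in> S then 1 else 0) ` Pow {0..<m}"
  proof
    fix a assume a: "a \<in> bool_cube m"
    have "a = (\<lambda>i. if i \<in> {i. i < m \<and> a i = 1} then 1 else 0)"
    proof
      fix i show "a i = (if i \<in> {i. i < m \<and> a i = 1} then 1 else 0)"
        using a unfolding bool_cube_def by (cases "i < m") auto
    qed
    then show "a \<in> (\<lambda>S i. if i \<in> S then 1 else 0) ` Pow {0..<m}"
      by (intro image_eqI[of _ _ "{i. i < m \<and> a i = 1}"]) auto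
  qed
qed simp

definition qpt :: "nat \<Rightarrow> (nat \<Rightarrow> real) \<Rightarrow> nat \<Rightarrow> nat \<Rightarrow> real" where
  "qpt k a j = (\<lambda>i. if i = 0 then a 0 + real j / (4 * real k) else a i)"

lemma small_frac:
  assumes "j < k" shows "0 \<le> real j / (4 * real k)" "real j / (4 * real k) < 1/4"
proof -
  show "0 \<le> real j / (4 * real k)" by simp
  have "real j < real k" using assms by simp
  then show "real j / (4 * real k) < 1/4" using assms by (simp add: divide_less_eq)
qed

lemma qpt_eq:
  assumes m: "0 < m" and a: "a \<in> bool_cube m" and a': "a' \<in> bool_cube m"
    and j: "j < k" and j': "j' < k" and eq: "qpt k a j = qpt k a' j'"
  shows "a = a' \<and> j = j'"
proof -
  have oth: "a i = a' i" if "i \<noteq> 0" for i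
    using fun_cong[OF eq, of i] that unfolding qpt_def by simp
  have z: "a 0 + real j / (4 * real k) = a' 0 + real j' / (4 * real k)"
    using fun_cong[OF eq, of 0] unfolding qpt_def by simp
  have a0: "a 0 \<in> {0,1}" "a' 0 \<in> {0,1}" using a a' m unfolding bool_cube_def by auto
  have "a 0 = a' 0"
  proof (rule ccontr)
    assume ne: "a 0 \<noteq> a' 0"
    then have "\<bar>a 0 - a' 0\<bar> = 1" using a0 by auto
    moreover have "\<bar>real j' / (4 * real k) - real j / (4 * real k)\<bar> < 1"
      unfolding abs_less_iff using small_frac[OF j] small_frac[OF j'] by linarith
    ultimately show False using z by (simp add: algebra_simps)
  qed
  then have "real j / (4 * real k) = real j' / (4 * real k)" using z by simp
  then have jj: "j = j'" using j by (simp add: divide_cancel_right)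
  have "a = a'"
  proof
    fix i show "a i = a' i" using oth \<open>a 0 = a' 0\<close> by (cases "i = 0") auto
  qed
  then show ?thesis using jj by simp
qed

lemma sqd_self:
  assumes m: "0 < m" and b: "b \<in> bool_cube m" and j: "j < k"
  shows "sqd m b (qpt k b j) < 1/16"
proof -
  have "sqd m b (qpt k b j) = (\<Sum>i<m. if i = 0 then (real j / (4 * real k))^2 else 0)"
    unfolding sqd_def qpt_def by (intro sum.cong) auto
  also have "\<dots> = (real j / (4 * real k))^2" using m by simp
  also have "\<dots> < (1/4)^2"
    using small_frac[OF j] by (intro power_strict_mono) auto
  finally show ?thesis by (simp add: power2_eq_square)
qed

lemma sqd_other:
  assumes m: "0 < m" and b: "b \<in> bool_cube m" and a: "a \<in> bool_cube m" and ab: "a \<noteq> b" and j: "j < k"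
  shows "sqd m b (qpt k a j) \<ge> 9/16"
proof -
  have "\<exists>i. a i \<noteq> b i"
  proof (rule ccontr)
    assume "\<not> (\<exists>i. a i \<noteq> b i)"
    then have "a = b" by auto
    then show False using ab by simp
  qed
  then obtain i where i: "a i \<noteq> b i" by blast
  have im: "i < m"
  proof (rule ccontr)
    assume "\<not> i < m" then have "a i = 0" "b i = 0" using a b unfolding bool_cube_def by auto
    then show False using i by simp
  qed
  have ab01: "a i \<in> {0,1}" "b i \<in> {0,1}" using a b im unfolding bool_cube_def by auto
  have tm: "(b i - qpt k a j i)^2 \<ge> 9/16"
  proof (cases "i = 0")
    case True
    define c where "c = real j / (4 * real k)"
    have c: "0 \<le> c" "c < 1/4" unfolding c_def using small_frac[OF j] by auto
    have "b i - qpt k a j i = (b 0 - a 0) - c" unfolding qpt_def c_def using True by simp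
    moreover have "b 0 - a 0 = 1 \<or> b 0 - a 0 = -1" using ab01 i True by auto
    ultimately have "b i - qpt k a j i = 1 - c \<or> b i - qpt k a j i = -1 - c" by auto
    moreover have "(1 - c)^2 \<ge> (3/4)^2" using c by (intro power_mono) auto
    moreover have "(-1 - c)^2 \<ge> (3/4)^2"
    proof -
      have "(-1 - c)^2 = (1 + c)^2" by (simp add: power2_eq_square algebra_simps)
      also have "\<dots> \<ge> (3/4)^2" using c by (intro power_mono) auto
      finally show ?thesis .
    qed
    ultimately show ?thesis by (auto simp: power2_eq_square)
  next
    case False
    then have "b i - qpt k a j i = b i - a i" unfolding qpt_def by simp
    moreover have "(b i - a i)^2 = 1" using ab01 i by auto
    ultimately show ?thesis by simp
  qed
  have "(b i - qpt k a j i)^2 \<le> sqd m b (qpt k a j)"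
    unfolding sqd_def using im by (intro member_le_sum) auto
  then show ?thesis using tm by simp
qed

lemma rep_exists:
  fixes f :: "(nat \<Rightarrow> real) \<Rightarrow> bool"
  assumes m: "0 < m" and k: "0 < k"
  shows "\<exists>P N. is_kNN_rep k m f P N"
proof -
  define C where "C = bool_cube m"
  have fC: "finite C" unfolding C_def by (rule cube_finite)
  define P where "P = {qpt k a j | a j. a \<in> C \<and> f a \<and> j < k}"
  define N where "N = {qpt k a j | a j. a \<in> C \<and> \<not> f a \<and> j < k}"
  have memP: "p \<in> P \<longleftrightarrow> (\<exists>a j. a \<in> C \<and> f a \<and> j < k \<and> p = qpt k a j)" for p
    unfolding P_def by blast
  have memN: "p \<in> N \<longleftrightarrow> (\<exists>a j. a \<in> C \<and> \<not> f a \<and> j < k \<and> p = qpt k a j)" for p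
    unfolding N_def by blast
  have memPN: "p \<in> P \<union> N \<longleftrightarrow> (\<exists>a j. a \<in> C \<and> j < k \<and> p = qpt k a j)" for p
  proof
    assume "p \<in> P \<union> N" then show "\<exists>a j. a \<in> C \<and> j < k \<and> p = qpt k a j"
      unfolding Un_iff memP memN by blast
  next
    assume "\<exists>a j. a \<in> C \<and> j < k \<and> p = qpt k a j"
    then obtain a j where h: "a \<in> C" "j < k" "p = qpt k a j" by blast
    show "p \<in> P \<union> N"
    proof (cases "f a")
      case True then have "p \<in> P" unfolding memP using h by blast
      then show ?thesis by simp
    next
      case False then have "p \<in> N" unfolding memN using h by blast
      then show ?thesis by simp
    qed
  qed
  have PNU: "P \<union> N \<subseteq> (\<lambda>(a,j). qpt k a j) ` (C \<times> {..<k})"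
  proof
    fix p assume "p \<in> P \<union> N"
    then obtain a j where h: "a \<in> C" "j < k" "p = qpt k a j" unfolding memPN by blast
    then show "p \<in> (\<lambda>(a,j). qpt k a j) ` (C \<times> {..<k})" by (intro image_eqI[of _ _ "(a,j)"]) auto
  qed
  have fPN: "finite (P \<union> N)" by (rule finite_subset[OF PNU]) (use fC in simp)
  then have fP: "finite P" and fN: "finite N" by auto
  have disj: "P \<inter> N = {}"
  proof (rule ccontr)
    assume "P \<inter> N \<noteq> {}"
    then obtain p where "p \<in> P" "p \<in> N" by blast
    then obtain a j a' j' where h: "a \<in> C" "f a" "j < k" "p = qpt k a j"
        "a' \<in> C" "\<not> f a'" "j' < k" "p = qpt k a' j'"
      unfolding memP memN by blast
    then have "a = a'" using qpt_eq[OF m, of a a' j k j'] unfolding C_def by simp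
    then show False using h by simp
  qed
  have eucl: "P \<union> N \<subseteq> euclid_space m"
  proof
    fix p assume "p \<in> P \<union> N"
    then obtain a j where a: "a \<in> C" and p: "p = qpt k a j" unfolding memPN by blast
    have "p i = 0" if i: "i \<ge> m" for i
    proof -
      have "i \<noteq> 0" using i m by simp
      then have "p i = a i" unfolding p qpt_def by simp
      also have "a i = 0" using a i unfolding C_def bool_cube_def by simp
      finally show ?thesis .
    qed
    then show "p \<in> euclid_space m" unfolding euclid_space_def by simp
  qed
  have main: "\<exists>S. S \<subseteq> P \<union> N \<and> card S = k \<and>
        (\<forall>s\<in>S. \<forall>t\<in>(P \<union> N) - S. edist m b s < edist m b t) \<and>
        (f b \<longleftrightarrow> real (card (S \<inter> P)) \<ge> real k / 2)" if b: "b \<in> bool_cube m" for b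
  proof -
    define S where "S = (\<lambda>j. qpt k b j) ` {..<k}"
    have bC: "b \<in> C" using b C_def by simp
    have memS: "s \<in> S \<longleftrightarrow> (\<exists>j. j < k \<and> s = qpt k b j)" for s unfolding S_def by blast
    have SPN: "S \<subseteq> P \<union> N"
    proof
      fix s assume "s \<in> S"
      then obtain j where "j < k" "s = qpt k b j" unfolding memS by blast
      then show "s \<in> P \<union> N" unfolding memPN using bC by blast
    qed
    have inj: "inj_on (\<lambda>j. qpt k b j) {..<k}"
    proof (rule inj_onI)
      fix j j' assume "j \<in> {..<k}" "j' \<in> {..<k}" "qpt k b j = qpt k b j'"
      then show "j = j'" using qpt_eq[OF m b b, of j k j'] by simp
    qed
    have cS: "card S = k" unfolding S_def using inj by (simp add: card_image)
    have dist: "\<forall>s\<in>S. \<forall>t\<in>(P \<union> N) - S. edist m b s < edist m b t"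
    proof (intro ballI)
      fix s t assume s: "s \<in> S" and t: "t \<in> (P \<union> N) - S"
      obtain j where j: "j < k" and sj: "s = qpt k b j" using s unfolding memS by blast
      have tPN: "t \<in> P \<union> N" and tS: "t \<notin> S" using t by auto
      obtain a j' where a: "a \<in> C" and j': "j' < k" and tj: "t = qpt k a j'" using tPN unfolding memPN by blast
      have ab: "a \<noteq> b"
      proof
        assume "a = b" then have "t \<in> S" unfolding memS using j' tj by blast
        then show False using tS by simp
      qed
      have acube: "a \<in> bool_cube m" using a C_def by simp
      have "sqd m b s < 1/16" unfolding sj by (rule sqd_self[OF m b j])
      also have "\<dots> < 9/16" by simp
      also have "\<dots> \<le> sqd m b t" unfolding tj by (rule sqd_other[OF m b acube ab j'])
      finally have "sqd m b s < sqd m b t" .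
      then show "edist m b s < edist m b t" unfolding edist_sqd by simp
    qed
    have lab: "f b \<longleftrightarrow> real (card (S \<inter> P)) \<ge> real k / 2"
    proof (cases "f b")
      case True
      have "S \<subseteq> P"
      proof
        fix s assume "s \<in> S"
        then obtain j where "j < k" "s = qpt k b j" unfolding memS by blast
        then show "s \<in> P" unfolding memP using bC True by blast
      qed
      then have "S \<inter> P = S" by blast
      then show ?thesis using True cS by simp
    next
      case False
      have "S \<inter> P = {}"
      proof (rule ccontr)
        assume "S \<inter> P \<noteq> {}"
        then obtain s where "s \<in> S" "s \<in> P" by blast
        then obtain j a j' where h: "j < k" "s = qpt k b j" "a \<in> C" "f a" "j' < k" "s = qpt k a j'"
          unfolding memS memP by blast
        then have "b = a" using qpt_eq[OF m b, of a j k j'] unfolding C_def by simp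
        then show False using h False by simp
      qed
      then show ?thesis using False k by simp
    qed
    show ?thesis using SPN cS dist lab by blast
  qed
  have "is_kNN_rep k m f P N" unfolding is_kNN_rep_def
    using fP fN disj eucl main by (intro conjI ballI) auto
  then show ?thesis by blast
qed


lemma nat_bound:
  fixes n s :: nat
  assumes h: "(2::nat)^n \<le> 37 * 4^s" and n: "8 \<le> n"
  shows "n \<le> 6 * s"
proof (rule ccontr)
  assume "\<not> n \<le> 6 * s"
  then have "2*s + 6 \<le> n" using n by arith
  then have "(2::nat)^(2*s+6) \<le> 2^n" by (rule power_increasing) simp
  moreover have "(2::nat)^(2*s+6) = 64 * 4^s" by (simp add: power_add power_mult)
  ultimately have a: "64 * 4^s \<le> (2::nat)^n" by simp
  have b: "(0::nat) < 4^s" by simp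
  show False using a b h by linarith
qed

theorem theorem11:
  fixes k :: nat
  assumes "k \<ge> 1"
  shows "\<exists>\<epsilon> :: nat \<Rightarrow> real. \<epsilon> \<longlonglongrightarrow> 0 \<and>
           (\<forall>\<^sub>F n in sequentially. real n / (6 + \<epsilon> n) \<le> real (kNN k (2 * n) (IP n)))"
proof -
  have ev: "real n / (6 + 0) \<le> real (kNN k (2 * n) (IP n))" if n: "8 \<le> n" for n
  proof -
    have "\<exists>P N. is_kNN_rep k (2*n) (IP n) P N" using rep_exists[of "2*n" k "IP n"] n assms by simp
    then have ex: "\<exists>s. \<exists>P N. is_kNN_rep k (2*n) (IP n) P N \<and> card (P \<union> N) = s" by blast
    have "\<exists>P N. is_kNN_rep k (2*n) (IP n) P N \<and> card (P \<union> N) = kNN k (2*n) (IP n)"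
      unfolding kNN_def by (rule LeastI_ex[OF ex])
    then obtain P N where rep: "is_kNN_rep k (2*n) (IP n) P N"
      and cPN: "card (P \<union> N) = kNN k (2*n) (IP n)" by blast
    define s where "s = kNN k (2*n) (IP n)"
    have "real (2^n) \<le> 37 * (real (card (P \<union> N) choose k))^2"
      by (rule knn_signrep[OF assms rep])
    also have "real (card (P \<union> N) choose k) \<le> real (2^s)"
      unfolding cPN s_def[symmetric] using binomial_le_pow2 by (simp only: of_nat_le_iff)
    then have "37 * (real (card (P \<union> N) choose k))^2 \<le> 37 * (real (2^s))^2"
      by (intro mult_left_mono power_mono) auto
    also have "37 * (real (2^s))^2 = real (37 * 4^s)"
    proof -
      have "(real (2^s))^2 = (2::real)^s * 2^s" by (simp add: power2_eq_square)
      also have "\<dots> = (2 * 2)^s" by (simp only: power_mult_distrib)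
      finally show ?thesis by simp
    qed
    finally have "(2::nat)^n \<le> 37 * 4^s" by (simp only: of_nat_le_iff)
    then have "n \<le> 6 * s" using nat_bound n by simp
    then show ?thesis unfolding s_def by simp
  qed
  show ?thesis
  proof (intro exI[of _ "\<lambda>n. 0"] conjI)
    show "(\<lambda>n. 0::real) \<longlonglongrightarrow> 0" by simp
    show "\<forall>\<^sub>F n in sequentially. real n / (6 + 0) \<le> real (kNN k (2 * n) (IP n))"
      unfolding eventually_sequentially using ev by blast
  qed
qed


end
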